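(* Let $\mathbb{K}$ be a topological field, $F$ a topological $\mathbb{K}$-vector space, $d\in\mathbb{N}$, $k\in\mathbb{N}_0\cup\{\infty\}$, and $U\subseteq\mathbb{K}^d$ open or of the form $U_1\times\cdots\times U_d$ with $U_i\subseteq\mathbb{K}$ having dense interior. For each $\alpha\in\mathbb{N}_0^d$ with $j:=|\alpha|\le k$, there exists an affine-linear map $\theta_\alpha\colon(\mathbb{K}^d)^{<\alpha>}\to(\mathbb{K}^d)^{[j]}$ such that $\theta_\alpha(U^{<\alpha>})\subseteq U^{[j]}$ and $f^{<\alpha>}=f^{[j]}\circ\theta_\alpha|_{U^{<\alpha>}}$ for each $C^k$-map $f\colon U\to F$.
   Context: Topological fields Hausdorff, non-discrete; vector spaces Hausdorff. For a subset $V$ of a $\mathbb{K}$-vector space $E$: $V^{[1]}=\{(x,y,t)\in V\times E\times\mathbb{K}:x+ty\in V\}$, $V^{[j]}=(V^{[1]})^{[j-1]}$, $V^{[0]}=V$; in particular $(\mathbb{K}^d)^{[1]}=\mathbb{K}^d\times\mathbb{K}^d\times\mathbb{K}$ and $(\mathbb{K}^d)^{[j]}$ is a finite-dimensional $\mathbb{K}$-vector space. For $g$ on $V$ (dense interior), $g$ is $C^1_{BGN}$ if continuous and $(x,y,t)\mapsto(g(x+ty)-g(x))/t$ ($t\ne0$) extends continuously to $g^{[1]}$ on $V^{[1]}$; $C^k_{BGN}$ if $C^1_{BGN}$ and $g^{[1]}$ is $C^{k-1}_{BGN}$; $g^{[j]}=(g^{[1]})^{[j-1]}$, $g^{[0]}=g$.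 For $\alpha\in\mathbb{N}_0^d$, $(\mathbb{K}^d)^{<\alpha>}=\mathbb{K}^{d+|\alpha|}$, elements written $(x^{(1)},\ldots,x^{(d)})$ with $x^{(i)}=(x^{(i)}_0,\ldots,x^{(i)}_{\alpha_i})$; $U^{<\alpha>}$: all such $x$ with $(x^{(1)}_{i_1},\ldots,x^{(d)}_{i_d})\in U$ for all $0\le i_\ell\le\alpha_\ell$; $U^{>\alpha<}$: those with pairwise distinct entries in each block; $f^{>\alpha<}(x)=\sum_{j_1,\ldots,j_d}\big(\prod_\ell\prod_{k_\ell\ne j_\ell}(x^{(\ell)}_{j_\ell}-x^{(\ell)}_{k_\ell})^{-1}\big)f(x^{(1)}_{j_1},\ldots,x^{(d)}_{j_d})$, and $f^{<\alpha>}$ its continuous extension to $U^{<\alpha>}$ (with $f^{<0>}=f$). A $C^k$-map $f\colon U\to F$ is a $C^k_{BGN}$-map; such maps are known to be exactly the maps for which all $f^{<\alpha>}$, $|\alpha|\le k$, exist (the $C^k_{SDS}$-maps). *)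

theory Defs
  imports "HOL-Analysis.Analysis" "HOL-Library.Extended_Nat"
begin

text \<open>A Hausdorff, non-discrete topological field (the type class supplies Hausdorffness).\<close>
definition topological_field :: "'k::{field,t2_space} itself \<Rightarrow> bool" where
  "topological_field _ \<longleftrightarrow>
     continuous_on UNIV (\<lambda>p::'k\<times>'k. fst p + snd p) \<and>
     continuous_on UNIV (\<lambda>p::'k\<times>'k. fst p * snd p) \<and>
     continuous_on UNIV (\<lambda>x::'k. - x) \<and>
     continuous_on (UNIV - {0}) (\<lambda>x::'k. inverse x) \<and>
     \<not> open {0::'k}"

definition topological_vector_space ::
    "('k::{field,t2_space} \<Rightarrow> 'f::{ab_group_add,t2_space} \<Rightarrow> 'f) \<Rightarrow> bool" where
  "topological_vector_space smul \<longleftrightarrow>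
     vector_space smul \<and>
     continuous_on UNIV (\<lambda>p::'f\<times>'f. fst p + snd p) \<and>
     continuous_on UNIV (\<lambda>p::'k\<times>'f. smul (fst p) (snd p))"

section \<open>The topology on K^n, realised on lists (K^n = lists of length n)\<close>

text \<open>Product topology on each K^n; the lists of different lengths form a disjoint union.\<close>
definition lopen :: "'a::topological_space list set \<Rightarrow> bool" where
  "lopen S \<longleftrightarrow> (\<forall>x\<in>S. \<exists>A. (\<forall>i<length x. open (A i) \<and> x!i \<in> A i) \<and>
       {y. length y = length x \<and> (\<forall>i<length x. y!i \<in> A i)} \<subseteq> S)"

lemma istopology_lopen: "istopology lopen"
  unfolding istopology_def
proof (intro conjI allI impI ballI)
  fix S T :: "'a list set" assume "lopen S" "lopen T"
  show "lopen (S \<inter> T)" unfolding lopen_def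
  proof
    fix x assume x: "x \<in> S \<inter> T"
    obtain A where A: "\<forall>i<length x. open (A i) \<and> x!i \<in> A i"
      "{y. length y = length x \<and> (\<forall>i<length x. y!i \<in> A i)} \<subseteq> S"
      using \<open>lopen S\<close> x unfolding lopen_def by blast
    obtain B where B: "\<forall>i<length x. open (B i) \<and> x!i \<in> B i"
      "{y. length y = length x \<and> (\<forall>i<length x. y!i \<in> B i)} \<subseteq> T"
      using \<open>lopen T\<close> x unfolding lopen_def by blast
    show "\<exists>C. (\<forall>i<length x. open (C i) \<and> x!i \<in> C i) \<and>
       {y. length y = length x \<and> (\<forall>i<length x. y!i \<in> C i)} \<subseteq> S \<inter> T"
      by (rule exI[of _ "\<lambda>i. A i \<inter> B i"]) (use A B in auto)
  qed
next
  fix K :: "'a list set set" assume "\<forall>S\<in>K. lopen S"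
  then show "lopen (\<Union>K)" unfolding lopen_def by (meson Union_iff subset_iff)
qed

definition ltop :: "'a::topological_space list topology" where
  "ltop = topology lopen"

definition dense_interior :: "'a::topological_space list set \<Rightarrow> bool" where
  "dense_interior V \<longleftrightarrow> V \<subseteq> ltop closure_of (ltop interior_of V)"

definition lcont :: "'a::topological_space list set \<Rightarrow> ('a list \<Rightarrow> 'f::topological_space) \<Rightarrow> bool" where
  "lcont V g \<longleftrightarrow> continuous_map (subtopology ltop V) euclidean g"

definition ladd :: "'k::field list \<Rightarrow> 'k \<Rightarrow> 'k list \<Rightarrow> 'k list" where
  "ladd x t y = map2 (\<lambda>a b. a + t * b) x y"

text \<open>V^[1], with (x,y,t) encoded as the list x @ y @ [t]\<close>
definition br1 :: "'k::field list set \<Rightarrow> 'k list set" where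
  "br1 V = {x @ y @ [t] | x y t. x \<in> V \<and> length y = length x \<and> ladd x t y \<in> V}"

fun brj :: "nat \<Rightarrow> 'k::field list set \<Rightarrow> 'k list set" where
  "brj 0 V = V"
| "brj (Suc j) V = brj j (br1 V)"

definition bx :: "'k list \<Rightarrow> 'k list" where "bx z = take ((length z - 1) div 2) z"
definition by' :: "'k list \<Rightarrow> 'k list" where
  "by' z = take ((length z - 1) div 2) (drop ((length z - 1) div 2) z)"
definition bt :: "'k list \<Rightarrow> 'k" where "bt z = last z"

definition diffquot :: "('k::field \<Rightarrow> 'f::ab_group_add \<Rightarrow> 'f) \<Rightarrow> ('k list \<Rightarrow> 'f) \<Rightarrow> 'k list \<Rightarrow> 'f" where
  "diffquot smul g z = smul (inverse (bt z)) (g (ladd (bx z) (bt z) (by' z)) - g (bx z))"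

definition C1_ext :: "('k::{field,t2_space} \<Rightarrow> 'f::{ab_group_add,t2_space} \<Rightarrow> 'f) \<Rightarrow>
     'k list set \<Rightarrow> ('k list \<Rightarrow> 'f) \<Rightarrow> ('k list \<Rightarrow> 'f) \<Rightarrow> bool" where
  "C1_ext smul V g h \<longleftrightarrow> lcont (br1 V) h \<and> (\<forall>z\<in>br1 V. bt z \<noteq> 0 \<longrightarrow> h z = diffquot smul g z)"

text \<open>g^[1]: the continuous extension of the difference quotient\<close>
definition d1 :: "('k::{field,t2_space} \<Rightarrow> 'f::{ab_group_add,t2_space} \<Rightarrow> 'f) \<Rightarrow>
     'k list set \<Rightarrow> ('k list \<Rightarrow> 'f) \<Rightarrow> 'k list \<Rightarrow> 'f" where
  "d1 smul V g = (SOME h. C1_ext smul V g h)"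

definition C1 :: "('k::{field,t2_space} \<Rightarrow> 'f::{ab_group_add,t2_space} \<Rightarrow> 'f) \<Rightarrow>
     'k list set \<Rightarrow> ('k list \<Rightarrow> 'f) \<Rightarrow> bool" where
  "C1 smul V g \<longleftrightarrow> dense_interior V \<and> lcont V g \<and> (\<exists>h. C1_ext smul V g h)"

fun Ck :: "('k::{field,t2_space} \<Rightarrow> 'f::{ab_group_add,t2_space} \<Rightarrow> 'f) \<Rightarrow>
     nat \<Rightarrow> 'k list set \<Rightarrow> ('k list \<Rightarrow> 'f) \<Rightarrow> bool" where
  "Ck smul 0 V g \<longleftrightarrow> dense_interior V \<and> lcont V g"
| "Ck smul (Suc k) V g \<longleftrightarrow> C1 smul V g \<and> Ck smul k (br1 V) (d1 smul V g)"

definition Ck_enat :: "('k::{field,t2_space} \<Rightarrow> 'f::{ab_group_add,t2_space} \<Rightarrow> 'f) \<Rightarrow>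
     enat \<Rightarrow> 'k list set \<Rightarrow> ('k list \<Rightarrow> 'f) \<Rightarrow> bool" where
  "Ck_enat smul k V g \<longleftrightarrow> (case k of enat n \<Rightarrow> Ck smul n V g | \<infinity> \<Rightarrow> (\<forall>n. Ck smul n V g))"

fun dj :: "('k::{field,t2_space} \<Rightarrow> 'f::{ab_group_add,t2_space} \<Rightarrow> 'f) \<Rightarrow>
     nat \<Rightarrow> 'k list set \<Rightarrow> ('k list \<Rightarrow> 'f) \<Rightarrow> 'k list \<Rightarrow> 'f" where
  "dj smul 0 V g = g"
| "dj smul (Suc j) V g = dj smul j (br1 V) (d1 smul V g)"

fun brdim :: "nat \<Rightarrow> nat \<Rightarrow> nat" where
  "brdim d 0 = d"
| "brdim d (Suc j) = brdim (2 * d + 1) j"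

text \<open>A multi-index alpha in N_0^d is a list of length d. An element of (K^d)^<alpha> is a list of
  length d + |alpha|, consisting of consecutive blocks x^(l) of lengths alpha_l + 1.\<close>
definition blk :: "nat list \<Rightarrow> 'k list \<Rightarrow> nat \<Rightarrow> nat \<Rightarrow> 'k" where
  "blk \<alpha> x l m = x ! (sum_list (map Suc (take l \<alpha>)) + m)"

definition midx :: "nat list \<Rightarrow> nat list set" where
  "midx \<alpha> = {\<iota>. length \<iota> = length \<alpha> \<and> (\<forall>l<length \<alpha>. \<iota>!l \<le> \<alpha>!l)}"

definition pt :: "nat list \<Rightarrow> 'k list \<Rightarrow> nat list \<Rightarrow> 'k list" where
  "pt \<alpha> x \<iota> = map (\<lambda>l. blk \<alpha> x l (\<iota>!l)) [0..<length \<alpha>]"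

definition Uang :: "'k list set \<Rightarrow> nat list \<Rightarrow> 'k list set" where
  "Uang U \<alpha> = {x. length x = length \<alpha> + sum_list \<alpha> \<and> (\<forall>\<iota>\<in>midx \<alpha>. pt \<alpha> x \<iota> \<in> U)}"

definition Urev :: "'k list set \<Rightarrow> nat list \<Rightarrow> 'k list set" where
  "Urev U \<alpha> = {x \<in> Uang U \<alpha>. \<forall>l<length \<alpha>. \<forall>m\<le>\<alpha>!l. \<forall>m'\<le>\<alpha>!l.
       m \<noteq> m' \<longrightarrow> blk \<alpha> x l m \<noteq> blk \<alpha> x l m'}"

definition frev :: "('k::field \<Rightarrow> 'f::ab_group_add \<Rightarrow> 'f) \<Rightarrow> nat list \<Rightarrow> ('k list \<Rightarrow> 'f) \<Rightarrow> 'k list \<Rightarrow> 'f" where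
  "frev smul \<alpha> f x = (\<Sum>\<iota>\<in>midx \<alpha>.
      smul (\<Prod>l<length \<alpha>. \<Prod>m\<in>{0..\<alpha>!l} - {\<iota>!l}. inverse (blk \<alpha> x l (\<iota>!l) - blk \<alpha> x l m))
           (f (pt \<alpha> x \<iota>)))"

text \<open>f^<alpha>: the continuous extension of f^>alpha< to U^<alpha>\<close>
definition fang :: "('k::{field,t2_space} \<Rightarrow> 'f::{ab_group_add,t2_space} \<Rightarrow> 'f) \<Rightarrow>
     'k list set \<Rightarrow> nat list \<Rightarrow> ('k list \<Rightarrow> 'f) \<Rightarrow> 'k list \<Rightarrow> 'f" where
  "fang smul U \<alpha> f = (SOME h. lcont (Uang U \<alpha>) h \<and> (\<forall>x\<in>Urev U \<alpha>. h x = frev smul \<alpha> f x))"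

definition affine_lmap :: "nat \<Rightarrow> nat \<Rightarrow> ('k::field list \<Rightarrow> 'k list) \<Rightarrow> bool" where
  "affine_lmap n N \<theta> \<longleftrightarrow> (\<exists>A b. \<forall>x. length x = n \<longrightarrow>
      \<theta> x = map (\<lambda>i. b i + (\<Sum>m<n. A i m * x!m)) [0..<N])"

end

theory Submission
  imports Defs
begin


lemma brj_Suc: "brj (Suc j) V = br1 (brj j V)"
  by (induction j arbitrary: V) auto

lemma dj_Suc: "dj smul (Suc j) V g = d1 smul (brj j V) (dj smul j V g)"
  by (induction j arbitrary: V g) auto

lemma brdim_Suc: "brdim d (Suc j) = 2 * brdim d j + 1"
proof (induction j arbitrary: d)
  case 0 then show ?case by simp
next
  case (Suc j) then show ?case by (metis brdim.simps(2))
qed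

lemma Ck_Suc_mono: "Ck smul (Suc n) V g \<Longrightarrow> Ck smul n V g"
proof (induction n arbitrary: V g)
  case 0 then show ?case by (auto simp: C1_def)
next
  case (Suc n) then show ?case by auto
qed

lemma Ck_mono: "Ck smul (m + n) V g \<Longrightarrow> Ck smul m V g"
proof (induction n)
  case 0 then show ?case by simp
next
  case (Suc n) then show ?case using Ck_Suc_mono[of smul "m+n" V g] by (simp del: Ck.simps)
qed

lemma Ck_shift: "Ck smul (m + n) V g \<Longrightarrow> Ck smul n (brj m V) (dj smul m V g)"
  by (induction m arbitrary: V g) auto

lemma Ck_lcont: "Ck smul n V g \<Longrightarrow> lcont V g"
  by (cases n) (auto simp: C1_def)

lemma d1_prop:
  assumes "C1 smul V g" "z \<in> br1 V" "bt z \<noteq> 0"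
  shows "d1 smul V g z = diffquot smul g z"
proof -
  from assms(1) obtain h where "C1_ext smul V g h" by (auto simp: C1_def)
  then have "C1_ext smul V g (d1 smul V g)" unfolding d1_def by (rule someI[of "C1_ext smul V g" h])
  then show ?thesis using assms by (auto simp: C1_ext_def)
qed

lemma Ck_enat_Ck: "Ck_enat smul k U f \<Longrightarrow> enat n \<le> k \<Longrightarrow> Ck smul n U f"
  apply (cases k)
   apply (auto simp: Ck_enat_def)
  by (metis Ck_mono le_Suc_ex)


definition gg :: "nat \<Rightarrow> (nat \<Rightarrow> 'k::field) \<Rightarrow> nat \<Rightarrow> 'k" where
  "gg k Y i = (\<Prod>m\<in>{0..k}-{i}. inverse (Y i - Y m))"

definition coef :: "nat list \<Rightarrow> (nat \<Rightarrow> nat \<Rightarrow> 'k::field) \<Rightarrow> nat list \<Rightarrow> 'k" where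
  "coef \<alpha> X \<iota> = (\<Prod>l<length \<alpha>. gg (\<alpha>!l) (X l) (\<iota>!l))"

definition FF :: "('k::field \<Rightarrow> 'f::ab_group_add \<Rightarrow> 'f) \<Rightarrow> nat list \<Rightarrow> (nat \<Rightarrow> nat \<Rightarrow> 'k) \<Rightarrow> ('k list \<Rightarrow> 'f) \<Rightarrow> 'f" where
  "FF smul \<alpha> X f = (\<Sum>\<iota>\<in>midx \<alpha>. smul (coef \<alpha> X \<iota>) (f (map (\<lambda>l. X l (\<iota>!l)) [0..<length \<alpha>])))"

lemma frev_FF: "frev smul \<alpha> f x = FF smul \<alpha> (blk \<alpha> x) f"
  unfolding frev_def FF_def coef_def gg_def pt_def by simp

lemma finite_midx: "finite (midx \<alpha>)"
proof -
  have "midx \<alpha> \<subseteq> {xs. set xs \<subseteq> {0..sum_list \<alpha>} \<and> length xs = length \<alpha>}"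
    unfolding midx_def
  proof (clarsimp)
    fix \<iota> :: "nat list" and v assume a: "length \<iota> = length \<alpha>" "\<forall>l<length \<alpha>. \<iota> ! l \<le> \<alpha> ! l" "v \<in> set \<iota>"
    then obtain l where "l < length \<iota>" "v = \<iota>!l" by (auto simp: in_set_conv_nth)
    then show "v \<le> sum_list \<alpha>" using a elem_le_sum_list[of l \<alpha>] by auto
  qed
  then show ?thesis by (rule finite_subset) (rule finite_lists_length_eq, simp)
qed

lemma gg_cong: "(\<And>m. m \<le> k \<Longrightarrow> Y m = Z m) \<Longrightarrow> i \<le> k \<Longrightarrow> gg k Y i = gg k Z i"
  unfolding gg_def by (intro prod.cong) auto

lemma gg_Suc: "i \<le> k \<Longrightarrow> gg (Suc k) Y i = inverse (Y i - Y (Suc k)) * gg k Y i"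
proof -
  assume i: "i \<le> k"
  have "{0..Suc k} - {i} = insert (Suc k) ({0..k} - {i})" using i by auto
  then show ?thesis unfolding gg_def by simp
qed

lemma gg_top: "gg (Suc k) Y (Suc k) = (\<Prod>m\<in>{0..k}. inverse (Y (Suc k) - Y m))"
proof -
  have "{0..Suc k} - {Suc k} = {0..k}" by auto
  then show ?thesis unfolding gg_def by simp
qed

lemma gg_top': "gg k Y k = (\<Prod>m\<in>{0..<k}. inverse (Y k - Y m))"
proof -
  have "{0..k} - {k} = {0..<k}" by auto
  then show ?thesis unfolding gg_def by simp
qed

lemma inv_diff_aux:
  fixes a b c G :: "'k::field"
  assumes "a \<noteq> c" "a \<noteq> b" "c \<noteq> b"
  shows "inverse (a - c) * (inverse (a - b) * G) = inverse (c - b) * (inverse (a - c) * G - inverse (a - b) * G)"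
proof -
  have "inverse (a - c) - inverse (a - b) = (c - b) * (inverse (a - c) * inverse (a - b))"
    using assms by (simp add: inverse_diff_inverse algebra_simps)
  then have "inverse (a - c) * G - inverse (a - b) * G = (c - b) * (inverse (a - c) * inverse (a - b)) * G"
    by (metis left_diff_distrib)
  moreover have "inverse (c - b) * ((c - b) * (inverse (a - c) * inverse (a - b)) * G) = inverse (a - c) * inverse (a - b) * G"
    using assms by (simp add: mult.assoc[symmetric])
  ultimately show ?thesis by (simp add: mult.assoc)
qed

lemma gg_identity:
  fixes y :: "nat \<Rightarrow> 'k::field"
  assumes dist: "\<And>m m'. m \<le> Suc n \<Longrightarrow> m' \<le> Suc n \<Longrightarrow> m \<noteq> m' \<Longrightarrow> y m \<noteq> y m'"
    and i: "i \<le> Suc n"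
  defines "ya \<equiv> y(n := y (Suc n))"
  shows "gg (Suc n) y i = inverse (y (Suc n) - y n) *
     ((if i = Suc n then gg n ya n else if i = n then 0 else gg n ya i) -
      (if i = Suc n then 0 else gg n y i))"
proof -
  have s: "y (Suc n) - y n \<noteq> 0" using dist[of "Suc n" n] by auto
  consider "i = Suc n" | "i = n" | "i < n" using i by linarith
  then show ?thesis
  proof cases
    case 1
    have "gg (Suc n) y i = (\<Prod>m\<in>{0..n}. inverse (y (Suc n) - y m))" using 1 gg_top by simp
    also have "\<dots> = inverse (y (Suc n) - y n) * (\<Prod>m\<in>{0..<n}. inverse (y (Suc n) - y m))"
      by (simp add: atLeastLessThanSuc_atLeastAtMost[symmetric] del: atLeastLessThanSuc_atLeastAtMost)
    also have "(\<Prod>m\<in>{0..<n}. inverse (y (Suc n) - y m)) = gg n ya n"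
      unfolding gg_top' ya_def by (intro prod.cong) auto
    finally show ?thesis using 1 by simp
  next
    case 2
    have "gg (Suc n) y i = inverse (y n - y (Suc n)) * gg n y n" using 2 gg_Suc[of n n y] by simp
    moreover have "inverse (y n - y (Suc n)) = - inverse (y (Suc n) - y n)"
      by (metis inverse_minus_eq minus_diff_eq)
    ultimately show ?thesis using 2 by simp
  next
    case 3
    then obtain n' where n: "n = Suc n'" by (cases n) auto
    have i': "i \<le> n'" using 3 n by simp
    have A: "y i - y (Suc n) \<noteq> 0" using dist[of i "Suc n"] 3 by auto
    have B: "y i - y n \<noteq> 0" using dist[of i n] 3 by auto
    have e1: "gg (Suc n) y i = inverse (y i - y (Suc n)) * (inverse (y i - y n) * gg n' y i)"
      using gg_Suc[of i n y] gg_Suc[of i n' y] 3 i' n by simp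
    have e2: "gg n y i = inverse (y i - y n) * gg n' y i" using gg_Suc[of i n' y] i' n by simp
    have "gg n ya i = inverse (ya i - ya n) * gg n' ya i" using gg_Suc[of i n' ya] i' n by simp
    also have "gg n' ya i = gg n' y i" using i' n by (intro gg_cong) (auto simp: ya_def)
    also have "ya i - ya n = y i - y (Suc n)" using 3 by (simp add: ya_def)
    finally have e3: "gg n ya i = inverse (y i - y (Suc n)) * gg n' y i" .
    show ?thesis using 3 A B s unfolding e1 e2 e3
      using inv_diff_aux[of "y i" "y (Suc n)" "y n" "gg n' y i"] by simp
  qed
qed

lemma coef_split:
  assumes "l0 < length \<beta>"
  shows "coef \<beta> Y \<iota> = gg (\<beta>!l0) (Y l0) (\<iota>!l0) * (\<Prod>l\<in>{..<length \<beta>}-{l0}. gg (\<beta>!l) (Y l) (\<iota>!l))"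
  unfolding coef_def using assms by (subst prod.remove[of _ l0]) auto

lemma FF_step:
  fixes smul :: "'k::field \<Rightarrow> 'f::ab_group_add \<Rightarrow> 'f"
  assumes vs: "vector_space smul"
    and l0: "l0 < length \<alpha>" and an: "\<alpha>!l0 = Suc n"
    and dist: "\<And>m m'. m \<le> Suc n \<Longrightarrow> m' \<le> Suc n \<Longrightarrow> m \<noteq> m' \<Longrightarrow> X l0 m \<noteq> X l0 m'"
  shows "FF smul \<alpha> X f = smul (inverse (X l0 (Suc n) - X l0 n))
     (FF smul (\<alpha>[l0:=n]) (X(l0 := (X l0)(n := X l0 (Suc n)))) f - FF smul (\<alpha>[l0:=n]) X f)"
proof -
  interpret vs: vector_space smul by (rule vs)
  define d where "d = length \<alpha>"
  define \<alpha>' where "\<alpha>' = \<alpha>[l0:=n]"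
  define Xa where "Xa = X(l0 := (X l0)(n := X l0 (Suc n)))"
  define s where "s = X l0 (Suc n) - X l0 n"
  define R where "R \<iota> = (\<Prod>l\<in>{..<d}-{l0}. gg (\<alpha>!l) (X l) (\<iota>!l))" for \<iota>
  define v where "v \<iota> = f (map (\<lambda>l. X l (\<iota>!l)) [0..<d])" for \<iota>
  define a where "a \<iota> = (if \<iota>!l0 = Suc n then gg n (Xa l0) n else if \<iota>!l0 = n then 0 else gg n (Xa l0) (\<iota>!l0)) * R \<iota>" for \<iota>
  define b where "b \<iota> = (if \<iota>!l0 = Suc n then 0 else gg n (X l0) (\<iota>!l0)) * R \<iota>" for \<iota>
  have l0d: "l0 < d" using l0 d_def by simp
  have len': "length \<alpha>' = d" by (simp add: \<alpha>'_def d_def)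
  have a'l0: "\<alpha>'!l0 = n" using l0 by (simp add: \<alpha>'_def)
  have a'l: "l \<noteq> l0 \<Longrightarrow> \<alpha>'!l = \<alpha>!l" for l by (simp add: \<alpha>'_def)
  have Xal: "l \<noteq> l0 \<Longrightarrow> Xa l = X l" for l by (simp add: Xa_def)
  have Xa0: "Xa l0 = (X l0)(n := X l0 (Suc n))" by (simp add: Xa_def)
  have Rupd: "R (\<iota>[l0:=w]) = R \<iota>" for \<iota> w unfolding R_def by (intro prod.cong) auto
  have coefX: "coef \<alpha> X \<iota> = gg (Suc n) (X l0) (\<iota>!l0) * R \<iota>" for \<iota>
    using coef_split[OF l0, of X \<iota>] an by (simp add: R_def d_def)
  have coef'X: "coef \<alpha>' X \<iota> = gg n (X l0) (\<iota>!l0) * R \<iota>" for \<iota>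
  proof -
    have "(\<Prod>l\<in>{..<d}-{l0}. gg (\<alpha>'!l) (X l) (\<iota>!l)) = R \<iota>"
      unfolding R_def by (intro prod.cong) (auto simp: a'l)
    then show ?thesis using coef_split[of l0 \<alpha>' X \<iota>] l0d len' a'l0 by simp
  qed
  have coef'Xa: "coef \<alpha>' Xa \<iota> = gg n (Xa l0) (\<iota>!l0) * R \<iota>" for \<iota>
  proof -
    have "(\<Prod>l\<in>{..<d}-{l0}. gg (\<alpha>'!l) (Xa l) (\<iota>!l)) = R \<iota>"
      unfolding R_def by (intro prod.cong) (auto simp: a'l Xal)
    then show ?thesis using coef_split[of l0 \<alpha>' Xa \<iota>] l0d len' a'l0 by simp
  qed
  have midx_iff: "\<iota> \<in> midx \<alpha> \<longleftrightarrow> length \<iota> = d \<and> (\<forall>l<d. \<iota>!l \<le> \<alpha>!l)" for \<iota>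
    by (simp add: midx_def d_def)
  have midx'_iff: "\<iota> \<in> midx \<alpha>' \<longleftrightarrow> \<iota> \<in> midx \<alpha> \<and> \<iota>!l0 \<le> n" for \<iota>
  proof
    assume h: "\<iota> \<in> midx \<alpha>'"
    then have L: "length \<iota> = d" "\<forall>l<d. \<iota>!l \<le> \<alpha>'!l" by (auto simp: midx_def len')
    have "\<iota>!l0 \<le> n" using L(2) l0d a'l0 by metis
    moreover have "\<iota>!l \<le> \<alpha>!l" if "l<d" for l
    proof (cases "l = l0")
      case True then show ?thesis using L(2) that a'l0 an by fastforce
    next
      case False then show ?thesis using L(2) that a'l by metis
    qed
    ultimately show "\<iota> \<in> midx \<alpha> \<and> \<iota>!l0 \<le> n" using L(1) by (simp add: midx_iff)
  next
    assume h: "\<iota> \<in> midx \<alpha> \<and> \<iota>!l0 \<le> n"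
    then have L: "length \<iota> = d" "\<forall>l<d. \<iota>!l \<le> \<alpha>!l" by (auto simp: midx_iff)
    have "\<iota>!l \<le> \<alpha>'!l" if "l<d" for l
    proof (cases "l = l0")
      case True then show ?thesis using h a'l0 by simp
    next
      case False then show ?thesis using L(2) that a'l by metis
    qed
    then show "\<iota> \<in> midx \<alpha>'" using L(1) by (simp add: midx_def len')
  qed
  have fin: "finite (midx \<alpha>)" by (rule finite_midx)
  have il_gen: "\<iota> \<in> midx \<alpha> \<Longrightarrow> \<iota>!l0 \<le> Suc n" for \<iota> using l0d an unfolding midx_iff by metis
  have C3: "coef \<alpha> X \<iota> = inverse s * (a \<iota> - b \<iota>)" if "\<iota> \<in> midx \<alpha>" for \<iota>
  proof -
    have il: "\<iota>!l0 \<le> Suc n" using that l0d an unfolding midx_iff by metis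
    have e: "gg (Suc n) (X l0) (\<iota>!l0) = inverse s *
     ((if \<iota>!l0 = Suc n then gg n (Xa l0) n else if \<iota>!l0 = n then 0 else gg n (Xa l0) (\<iota>!l0)) -
      (if \<iota>!l0 = Suc n then 0 else gg n (X l0) (\<iota>!l0)))"
      unfolding s_def Xa0 by (rule gg_identity[of n "X l0" "\<iota>!l0"]) (use dist il in auto)
    have "a \<iota> - b \<iota> = ((if \<iota>!l0 = Suc n then gg n (Xa l0) n else if \<iota>!l0 = n then 0 else gg n (Xa l0) (\<iota>!l0)) -
      (if \<iota>!l0 = Suc n then 0 else gg n (X l0) (\<iota>!l0))) * R \<iota>"
      unfolding a_def b_def by (rule left_diff_distrib[symmetric])
    then show ?thesis unfolding coefX e by (simp add: mult.assoc)
  qed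
  have "FF smul \<alpha> X f = (\<Sum>\<iota>\<in>midx \<alpha>. smul (inverse s * (a \<iota> - b \<iota>)) (v \<iota>))"
    unfolding FF_def v_def d_def by (intro sum.cong) (auto simp: C3)
  also have "\<dots> = smul (inverse s) ((\<Sum>\<iota>\<in>midx \<alpha>. smul (a \<iota>) (v \<iota>)) - (\<Sum>\<iota>\<in>midx \<alpha>. smul (b \<iota>) (v \<iota>)))"
  proof -
    have "smul (inverse s * (a \<iota> - b \<iota>)) (v \<iota>) = smul (inverse s) (smul (a \<iota>) (v \<iota>) - smul (b \<iota>) (v \<iota>))" for \<iota>
      by (metis vs.scale_scale vs.scale_left_diff_distrib)
    then show ?thesis by (simp only: vs.scale_sum_right[symmetric] sum_subtractf)
  qed
  also have "(\<Sum>\<iota>\<in>midx \<alpha>. smul (b \<iota>) (v \<iota>)) = FF smul \<alpha>' X f"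
  proof -
    have "(\<Sum>\<iota>\<in>midx \<alpha>. smul (b \<iota>) (v \<iota>)) = (\<Sum>\<iota>\<in>midx \<alpha>'. smul (b \<iota>) (v \<iota>))"
    proof (rule sum.mono_neutral_right[OF fin])
      show "midx \<alpha>' \<subseteq> midx \<alpha>" by (auto simp: midx'_iff)
      show "\<forall>i\<in>midx \<alpha> - midx \<alpha>'. smul (b i) (v i) = 0"
      proof
        fix i assume "i \<in> midx \<alpha> - midx \<alpha>'"
        then have "i!l0 = Suc n" using il_gen[of i] by (auto simp: midx'_iff)
        then show "smul (b i) (v i) = 0" by (simp add: b_def)
      qed
    qed
    also have "\<dots> = FF smul \<alpha>' X f"
      unfolding FF_def len' v_def
      by (intro sum.cong refl) (auto simp: midx'_iff b_def coef'X)
    finally show ?thesis .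
  qed
  also have "(\<Sum>\<iota>\<in>midx \<alpha>. smul (a \<iota>) (v \<iota>)) = FF smul \<alpha>' Xa f"
  proof -
    define M1 where "M1 = {\<iota>\<in>midx \<alpha>. \<iota>!l0 < n}"
    define M2 where "M2 = {\<iota>\<in>midx \<alpha>. \<iota>!l0 = n}"
    define T where "T = {\<iota>\<in>midx \<alpha>. \<iota>!l0 = Suc n}"
    have fM1: "finite M1" and fM2: "finite M2" and fT: "finite T"
      using fin by (auto simp: M1_def M2_def T_def)
    have split: "midx \<alpha> = (M1 \<union> M2) \<union> T"
      by (auto simp: M1_def M2_def T_def) (metis il_gen le_Suc_eq nat_less_le)
    have split': "midx \<alpha>' = M1 \<union> M2"
      by (auto simp: M1_def M2_def midx'_iff)
    define tm where "tm \<iota> = smul (coef \<alpha>' Xa \<iota>) (f (map (\<lambda>l. Xa l (\<iota>!l)) [0..<d]))" for \<iota>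
    have "(\<Sum>\<iota>\<in>midx \<alpha>. smul (a \<iota>) (v \<iota>)) =
          (\<Sum>\<iota>\<in>M1. smul (a \<iota>) (v \<iota>)) + (\<Sum>\<iota>\<in>M2. smul (a \<iota>) (v \<iota>)) + (\<Sum>\<iota>\<in>T. smul (a \<iota>) (v \<iota>))"
    proof -
      have d1: "(M1 \<union> M2) \<inter> T = {}" by (auto simp: M1_def M2_def T_def)
      have d2: "M1 \<inter> M2 = {}" by (auto simp: M1_def M2_def)
      show ?thesis unfolding split by (simp add: sum.union_disjoint fM1 fM2 fT d1 d2)
    qed
    also have "(\<Sum>\<iota>\<in>M2. smul (a \<iota>) (v \<iota>)) = 0"
      by (intro sum.neutral) (auto simp: M2_def a_def)
    also have "(\<Sum>\<iota>\<in>M1. smul (a \<iota>) (v \<iota>)) = (\<Sum>\<iota>\<in>M1. tm \<iota>)"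
    proof (intro sum.cong refl)
      fix \<iota> assume "\<iota> \<in> M1"
      then have i: "\<iota>!l0 < n" by (auto simp: M1_def)
      have mp: "map (\<lambda>l. Xa l (\<iota>!l)) [0..<d] = map (\<lambda>l. X l (\<iota>!l)) [0..<d]"
        using i by (intro map_cong refl) (auto simp: Xa_def)
      show "smul (a \<iota>) (v \<iota>) = tm \<iota>" using i
        unfolding tm_def v_def a_def coef'Xa mp by simp
    qed
    also have "(\<Sum>\<iota>\<in>T. smul (a \<iota>) (v \<iota>)) = (\<Sum>\<iota>\<in>M2. tm \<iota>)"
    proof (rule sum.reindex_bij_witness[of _ "\<lambda>\<iota>. \<iota>[l0:=Suc n]" "\<lambda>\<iota>. \<iota>[l0:=n]"])
      fix \<iota> assume "\<iota> \<in> T"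
      then show "(\<iota>[l0 := n])[l0 := Suc n] = \<iota>" by (metis (mono_tags, lifting) T_def list_update_id list_update_overwrite mem_Collect_eq)
      show "\<iota>[l0 := n] \<in> M2" using \<open>\<iota> \<in> T\<close> l0d
        by (auto simp: T_def M2_def midx_iff nth_list_update)
    next
      fix \<iota> assume "\<iota> \<in> M2"
      then show "(\<iota>[l0 := Suc n])[l0 := n] = \<iota>" by (metis (mono_tags, lifting) M2_def list_update_id list_update_overwrite mem_Collect_eq)
      show "\<iota>[l0 := Suc n] \<in> T" using \<open>\<iota> \<in> M2\<close> l0d an
        by (auto simp: T_def M2_def midx_iff nth_list_update)
    next
      fix \<iota> assume "\<iota> \<in> T"
      then have i: "\<iota>!l0 = Suc n" and len: "length \<iota> = d" by (auto simp: T_def midx_iff)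
      have mp: "map (\<lambda>l. Xa l (\<iota>[l0:=n]!l)) [0..<d] = map (\<lambda>l. X l (\<iota>!l)) [0..<d]"
        using i len l0d by (intro map_cong refl) (auto simp: Xa_def nth_list_update)
      have i2: "(\<iota>[l0:=n])!l0 = n" using len l0d by simp
      show "tm (\<iota>[l0 := n]) = smul (a \<iota>) (v \<iota>)" using i
        unfolding tm_def v_def a_def coef'Xa mp Rupd i2 by simp
    qed
    also have "(\<Sum>\<iota>\<in>M1. tm \<iota>) + 0 + (\<Sum>\<iota>\<in>M2. tm \<iota>) = FF smul \<alpha>' Xa f"
      unfolding FF_def len' split' tm_def[symmetric]
      by (subst sum.union_disjoint) (use fM1 fM2 in \<open>auto simp: M1_def M2_def\<close>)
    finally show ?thesis .
  qed
  finally show ?thesis by (simp add: \<alpha>'_def Xa_def s_def)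
qed


definition off :: "nat list \<Rightarrow> nat \<Rightarrow> nat" where
  "off \<alpha> l = sum_list (map Suc (take l \<alpha>))"

definition del :: "nat \<Rightarrow> 'a list \<Rightarrow> 'a list" where
  "del q x = take q x @ drop (Suc q) x"

lemma blk_off: "blk \<alpha> x l m = x ! (off \<alpha> l + m)"
  by (simp add: blk_def off_def)

lemma off_sum: "l \<le> length \<alpha> \<Longrightarrow> off \<alpha> l = (\<Sum>i<l. Suc (\<alpha>!i))"
  unfolding off_def sum_list_sum_nth by (simp add: min_def atLeast0LessThan)

lemma off_Suc: "l < length \<alpha> \<Longrightarrow> off \<alpha> (Suc l) = off \<alpha> l + Suc (\<alpha>!l)"
  by (simp add: off_sum)

lemma off_mono: "l \<le> l' \<Longrightarrow> l' \<le> length \<alpha> \<Longrightarrow> off \<alpha> l \<le> off \<alpha> l'"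
  by (simp add: off_sum sum_mono2)

lemma off_len: "off \<alpha> (length \<alpha>) = length \<alpha> + sum_list \<alpha>"
  by (induction \<alpha>) (auto simp: off_def)

lemma off_lt: "l < length \<alpha> \<Longrightarrow> m \<le> \<alpha>!l \<Longrightarrow> off \<alpha> l + m < length \<alpha> + sum_list \<alpha>"
proof -
  assume a: "l < length \<alpha>" "m \<le> \<alpha>!l"
  have "off \<alpha> l + m < off \<alpha> (Suc l)" using a by (simp add: off_Suc)
  also have "\<dots> \<le> off \<alpha> (length \<alpha>)" using a by (intro off_mono) auto
  finally show ?thesis by (simp add: off_len)
qed

lemma off_upd_le: "l \<le> l0 \<Longrightarrow> off (\<alpha>[l0:=v]) l = off \<alpha> l"
  by (simp add: off_def)

lemma off_upd_gt:
  assumes "l0 < l" "l \<le> length \<alpha>" "\<alpha>!l0 = Suc n"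
  shows "Suc (off (\<alpha>[l0:=n]) l) = off \<alpha> l"
proof -
  have l0: "l0 < length \<alpha>" using assms by simp
  have "off \<alpha> l = Suc (\<alpha>!l0) + (\<Sum>i\<in>{..<l}-{l0}. Suc (\<alpha>!i))"
    using assms by (simp add: off_sum sum.remove[of "{..<l}" l0])
  moreover have "off (\<alpha>[l0:=n]) l = Suc n + (\<Sum>i\<in>{..<l}-{l0}. Suc (\<alpha>!i))"
    using assms by (simp add: off_sum sum.remove[of "{..<l}" l0] nth_list_update)
  ultimately show ?thesis using assms by simp
qed

lemma del_length: "q < length x \<Longrightarrow> length (del q x) = length x - 1"
  by (simp add: del_def)

lemma del_nth: "q < length x \<Longrightarrow> i < length x - 1 \<Longrightarrow> del q x ! i = x ! (if i < q then i else Suc i)"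
  by (auto simp: del_def nth_append min_def)

lemma sum_list_upd: "l0 < length \<alpha> \<Longrightarrow> \<alpha>!l0 = Suc n \<Longrightarrow> Suc (sum_list (\<alpha>[l0:=n])) = sum_list \<alpha>"
proof -
  assume a: "l0 < length \<alpha>" "\<alpha>!l0 = Suc n"
  have "sum_list (\<alpha>[l0:=n]) = sum_list \<alpha> + n - Suc n" using a by (simp add: sum_list_update)
  moreover have "Suc n \<le> sum_list \<alpha>" using elem_le_sum_list[of l0 \<alpha>] a by simp
  ultimately show ?thesis by simp
qed

locale redux =
  fixes \<alpha> :: "nat list" and l0 n :: nat
  assumes l0: "l0 < length \<alpha>" and an: "\<alpha>!l0 = Suc n"
begin

definition "\<alpha>' = \<alpha>[l0:=n]"
definition "q = off \<alpha> l0 + Suc n"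

lemma len': "length \<alpha>' = length \<alpha>" by (simp add: \<alpha>'_def)
lemma sum': "Suc (sum_list \<alpha>') = sum_list \<alpha>" using sum_list_upd[OF l0 an] by (simp add: \<alpha>'_def)
lemma a'l0: "\<alpha>'!l0 = n" using l0 by (simp add: \<alpha>'_def)
lemma a'l: "l \<noteq> l0 \<Longrightarrow> \<alpha>'!l = \<alpha>!l" by (simp add: \<alpha>'_def)
lemma a'le: "l < length \<alpha> \<Longrightarrow> m \<le> \<alpha>'!l \<Longrightarrow> m \<le> \<alpha>!l"
  by (cases "l = l0") (auto simp: a'l a'l0 an)

lemma q_lt: "q < length \<alpha> + sum_list \<alpha>"
  unfolding q_def using off_lt[OF l0, of "Suc n"] an by simp

lemma q_pos: "0 < q" by (simp add: q_def)

lemma idx: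
  assumes l: "l < length \<alpha>" and m: "m \<le> \<alpha>'!l"
  shows "(l \<le> l0 \<and> off \<alpha>' l + m = off \<alpha> l + m \<and> off \<alpha> l + m < q \<and> (off \<alpha> l + m = q - 1 \<longleftrightarrow> l = l0 \<and> m = n))
       \<or> (l0 < l \<and> Suc (off \<alpha>' l + m) = off \<alpha> l + m \<and> q \<le> off \<alpha>' l + m)"
proof (cases "l \<le> l0")
  case True
  have e: "off \<alpha>' l = off \<alpha> l" unfolding \<alpha>'_def using True by (rule off_upd_le)
  show ?thesis
  proof (cases "l = l0")
    case True
    then show ?thesis using e m a'l0 by (auto simp: q_def)
  next
    case False
    then have ll: "l < l0" using True by simp
    have "off \<alpha> l + m < off \<alpha> (Suc l)" using m a'l[of l] False l by (simp add: off_Suc)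
    also have "\<dots> \<le> off \<alpha> l0" using ll l0 by (intro off_mono) auto
    finally show ?thesis using e True False by (auto simp: q_def)
  qed
next
  case False
  then have ll: "l0 < l" by simp
  have e: "Suc (off \<alpha>' l) = off \<alpha> l" unfolding \<alpha>'_def using ll l an by (intro off_upd_gt) auto
  have "off \<alpha> (Suc l0) \<le> off \<alpha> l" using ll l by (intro off_mono) auto
  then have "Suc q \<le> off \<alpha> l" using l0 an by (simp add: off_Suc q_def)
  then show ?thesis using e ll by auto
qed

lemma blk_del:
  assumes x: "length x = length \<alpha> + sum_list \<alpha>" and l: "l < length \<alpha>" and m: "m \<le> \<alpha>'!l"
  shows "blk \<alpha>' (del q x) l m = blk \<alpha> x l m"
proof -
  have ql: "q < length x" using q_lt x by simp
  have lt: "off \<alpha> l + m < length x" using off_lt[OF l a'le[OF l m]] x by simp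
  from idx[OF l m] show ?thesis
  proof
    assume h: "l \<le> l0 \<and> off \<alpha>' l + m = off \<alpha> l + m \<and> off \<alpha> l + m < q \<and> (off \<alpha> l + m = q - 1 \<longleftrightarrow> l = l0 \<and> m = n)"
    then have "off \<alpha> l + m < length x - 1" using ql by linarith
    then show ?thesis unfolding blk_off using h del_nth[OF ql, of "off \<alpha> l + m"] by auto
  next
    assume h: "l0 < l \<and> Suc (off \<alpha>' l + m) = off \<alpha> l + m \<and> q \<le> off \<alpha>' l + m"
    have e: "x ! (off \<alpha> l + m) = x ! Suc (off \<alpha>' l + m)" using h by metis
    have "off \<alpha>' l + m < length x - 1" using h lt by linarith
    then show ?thesis unfolding blk_off e using h del_nth[OF ql, of "off \<alpha>' l + m"] by auto
  qed
qed

lemma blk_dela: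
  assumes x: "length x = length \<alpha> + sum_list \<alpha>" and l: "l < length \<alpha>" and m: "m \<le> \<alpha>'!l"
  shows "blk \<alpha>' ((del q x)[q - 1 := x!q]) l m = (if l = l0 \<and> m = n then blk \<alpha> x l0 (Suc n) else blk \<alpha> x l m)"
proof -
  have ql: "q < length x" using q_lt x by simp
  have lt: "off \<alpha> l + m < length x" using off_lt[OF l a'le[OF l m]] x by simp
  have ldel: "length (del q x) = length x - 1" using del_length[OF ql] .
  from idx[OF l m] show ?thesis
  proof
    assume h: "l \<le> l0 \<and> off \<alpha>' l + m = off \<alpha> l + m \<and> off \<alpha> l + m < q \<and> (off \<alpha> l + m = q - 1 \<longleftrightarrow> l = l0 \<and> m = n)"
    show ?thesis
    proof (cases "l = l0 \<and> m = n")
      case True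
      then show ?thesis using h ql ldel unfolding blk_off by (auto simp: q_def)
    next
      case False
      have "off \<alpha> l + m < length x - 1" using h ql by linarith
      then show ?thesis unfolding blk_off using h del_nth[OF ql, of "off \<alpha> l + m"] ldel False
        by (auto simp: nth_list_update)
    qed
  next
    assume h: "l0 < l \<and> Suc (off \<alpha>' l + m) = off \<alpha> l + m \<and> q \<le> off \<alpha>' l + m"
    have e: "x ! (off \<alpha> l + m) = x ! Suc (off \<alpha>' l + m)" using h by metis
    have "off \<alpha>' l + m < length x - 1" using h lt by linarith
    then show ?thesis unfolding blk_off e using h del_nth[OF ql, of "off \<alpha>' l + m"] ldel q_pos
      by (auto simp: nth_list_update)
  qed
qed

lemma xq: "length x = length \<alpha> + sum_list \<alpha> \<Longrightarrow> x!q = blk \<alpha> x l0 (Suc n)"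
  by (simp add: blk_off q_def)
lemma xq1: "length x = length \<alpha> + sum_list \<alpha> \<Longrightarrow> x!(q-1) = blk \<alpha> x l0 n"
  by (simp add: blk_off q_def)

lemma len_del: "length x = length \<alpha> + sum_list \<alpha> \<Longrightarrow> length (del q x) = length \<alpha>' + sum_list \<alpha>'"
  using del_length[of q x] q_lt len' sum' by simp

lemma midx'_sub: "\<iota> \<in> midx \<alpha>' \<Longrightarrow> \<iota> \<in> midx \<alpha>"
  by (auto simp: midx_def len' a'le)

lemma pt_del:
  assumes x: "length x = length \<alpha> + sum_list \<alpha>" and i: "\<iota> \<in> midx \<alpha>'"
  shows "pt \<alpha>' (del q x) \<iota> = pt \<alpha> x \<iota>"
  unfolding pt_def len' using i blk_del[OF x] by (auto simp: midx_def len')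

lemma pt_dela:
  assumes x: "length x = length \<alpha> + sum_list \<alpha>" and i: "\<iota> \<in> midx \<alpha>'"
  shows "pt \<alpha>' ((del q x)[q - 1 := x!q]) \<iota> = pt \<alpha> x (if \<iota>!l0 = n then \<iota>[l0 := Suc n] else \<iota>)
     \<and> (if \<iota>!l0 = n then \<iota>[l0 := Suc n] else \<iota>) \<in> midx \<alpha>"
proof -
  have li: "length \<iota> = length \<alpha>" "\<forall>l<length \<alpha>. \<iota>!l \<le> \<alpha>'!l" using i by (auto simp: midx_def len')
  have "pt \<alpha>' ((del q x)[q - 1 := x!q]) \<iota> = pt \<alpha> x (if \<iota>!l0 = n then \<iota>[l0 := Suc n] else \<iota>)"
    unfolding pt_def len' using li blk_dela[OF x] l0 by (auto simp: nth_list_update)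
  moreover have "(if \<iota>!l0 = n then \<iota>[l0 := Suc n] else \<iota>) \<in> midx \<alpha>"
    using li a'le an l0 midx'_sub[OF i] by (auto simp: midx_def nth_list_update)
  ultimately show ?thesis by simp
qed

lemma Uang_del:
  assumes "x \<in> Uang U \<alpha>"
  shows "del q x \<in> Uang U \<alpha>'" "(del q x)[q - 1 := x!q] \<in> Uang U \<alpha>'"
proof -
  have x: "length x = length \<alpha> + sum_list \<alpha>" and P: "\<forall>\<iota>\<in>midx \<alpha>. pt \<alpha> x \<iota> \<in> U"
    using assms by (auto simp: Uang_def)
  show "del q x \<in> Uang U \<alpha>'" unfolding Uang_def
    using len_del[OF x] pt_del[OF x] P midx'_sub by auto
  show "(del q x)[q - 1 := x!q] \<in> Uang U \<alpha>'" unfolding Uang_def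
    using len_del[OF x] pt_dela[OF x] P by auto
qed

lemma Urev_del:
  assumes "x \<in> Urev U \<alpha>"
  shows "del q x \<in> Urev U \<alpha>'" "(del q x)[q - 1 := x!q] \<in> Urev U \<alpha>'"
proof -
  have xa: "x \<in> Uang U \<alpha>" using assms by (simp add: Urev_def)
  then have x: "length x = length \<alpha> + sum_list \<alpha>" by (simp add: Uang_def)
  have D: "\<And>l m m'. l < length \<alpha> \<Longrightarrow> m \<le> \<alpha>!l \<Longrightarrow> m' \<le> \<alpha>!l \<Longrightarrow> m \<noteq> m' \<Longrightarrow> blk \<alpha> x l m \<noteq> blk \<alpha> x l m'"
    using assms by (auto simp: Urev_def)
  show "del q x \<in> Urev U \<alpha>'" unfolding Urev_def
    using Uang_del(1)[OF xa] blk_del[OF x] D a'le len' by auto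
  show "(del q x)[q - 1 := x!q] \<in> Urev U \<alpha>'" unfolding Urev_def
  proof (intro CollectI conjI Uang_del(2)[OF xa] allI impI)
    fix l m m' assume l: "l < length \<alpha>'" and m: "m \<le> \<alpha>'!l" and m': "m' \<le> \<alpha>'!l" and ne: "m \<noteq> m'"
    have l': "l < length \<alpha>" using l len' by simp
    show "blk \<alpha>' ((del q x)[q - 1 := x!q]) l m \<noteq> blk \<alpha>' ((del q x)[q - 1 := x!q]) l m'"
      unfolding blk_dela[OF x l' m] blk_dela[OF x l' m']
      using D[OF l'] a'le[OF l' m] a'le[OF l' m'] ne m m' an a'l0 l0
      by (auto)
  qed
qed

end


lemma affine_length: "affine_lmap n N \<theta> \<Longrightarrow> length x = n \<Longrightarrow> length (\<theta> x) = N"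
  unfolding affine_lmap_def by auto

lemma affine_id: "affine_lmap n n (\<lambda>x. x)"
  unfolding affine_lmap_def
proof (intro exI allI impI)
  fix x :: "'a list" assume x: "length x = n"
  show "x = map (\<lambda>i. 0 + (\<Sum>m<n. (if i = m then 1 else 0) * x!m)) [0..<n]"
  proof (intro nth_equalityI)
    show "length x = length (map (\<lambda>i. 0 + (\<Sum>m<n. (if i = m then 1 else 0) * x!m)) [0..<n])" using x by simp
    fix i assume "i < length x"
    moreover have "(\<Sum>m<n. (if i = m then 1 else 0) * x!m) = (\<Sum>m<n. if m = i then x!i else 0)"
      by (intro sum.cong) auto
    ultimately show "x!i = map (\<lambda>i. 0 + (\<Sum>m<n. (if i = m then 1 else 0) * x!m)) [0..<n] ! i"
      using x by simp
  qed
qed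

lemma affine_append:
  assumes "affine_lmap n N1 \<theta>1" "affine_lmap n N2 \<theta>2"
  shows "affine_lmap n (N1+N2) (\<lambda>x. \<theta>1 x @ \<theta>2 x)"
proof -
  obtain A1 b1 where 1: "\<forall>x. length x = n \<longrightarrow> \<theta>1 x = map (\<lambda>i. b1 i + (\<Sum>m<n. A1 i m * x!m)) [0..<N1]"
    using assms(1) unfolding affine_lmap_def by blast
  obtain A2 b2 where 2: "\<forall>x. length x = n \<longrightarrow> \<theta>2 x = map (\<lambda>i. b2 i + (\<Sum>m<n. A2 i m * x!m)) [0..<N2]"
    using assms(2) unfolding affine_lmap_def by blast
  show ?thesis unfolding affine_lmap_def
  proof (intro exI allI impI)
    fix x :: "'a list" assume x: "length x = n"
    show "\<theta>1 x @ \<theta>2 x = map (\<lambda>i. (if i < N1 then b1 i else b2 (i - N1)) +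
        (\<Sum>m<n. (if i < N1 then A1 i m else A2 (i - N1) m) * x!m)) [0..<N1+N2]"
      using 1 2 x by (intro nth_equalityI) (auto simp: nth_append)
  qed
qed

lemma affine_const: "length c = N \<Longrightarrow> affine_lmap n N (\<lambda>x. c)"
  unfolding affine_lmap_def
  by (rule exI[of _ "\<lambda>i m. 0"], rule exI[of _ "\<lambda>i. c!i"]) (auto intro: nth_equalityI)

lemma affine_diff:
  fixes q p :: nat
  assumes "q < n" "p < n"
  shows "affine_lmap n 1 (\<lambda>x::'a::field list. [x!q - x!p])"
  unfolding affine_lmap_def
proof (intro exI allI impI)
  fix x :: "'a list" assume x: "length x = n"
  have "(\<Sum>m<n. ((if m = q then 1 else 0) - (if m = p then 1 else 0)) * x!m) = x!q - x!p"
  proof -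
    have "(\<Sum>m<n. ((if m = q then 1 else 0) - (if m = p then 1 else 0)) * x!m) =
      (\<Sum>m<n. (if m = q then x!q else 0)) - (\<Sum>m<n. (if m = p then x!p else 0))"
      unfolding sum_subtractf[symmetric] by (intro sum.cong) auto
    then show ?thesis using assms by simp
  qed
  then show "[x!q - x!p] = map (\<lambda>i. 0 + (\<Sum>m<n. ((if m = q then 1 else 0) - (if m = p then 1 else 0)) * x!m)) [0..<1]"
    by simp
qed

lemma affine_select:
  assumes "affine_lmap n N \<theta>" "\<forall>m<n. \<sigma> m < n'"
  shows "affine_lmap n' N (\<lambda>x. \<theta> (map (\<lambda>m. x!(\<sigma> m)) [0..<n]))"
proof -
  obtain A b where 1: "\<forall>x. length x = n \<longrightarrow> \<theta> x = map (\<lambda>i. b i + (\<Sum>m<n. A i m * x!m)) [0..<N]"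
    using assms(1) unfolding affine_lmap_def by blast
  show ?thesis unfolding affine_lmap_def
  proof (intro exI allI impI)
    fix x :: "'a list" assume x: "length x = n'"
    have "(\<Sum>m<n. A i m * x!(\<sigma> m)) = (\<Sum>m'<n'. (\<Sum>m\<in>{m. m < n \<and> \<sigma> m = m'}. A i m) * x!m')" for i
    proof -
      have "(\<Sum>m'<n'. (\<Sum>m\<in>{m. m < n \<and> \<sigma> m = m'}. A i m) * x!m') =
            (\<Sum>m'<n'. (\<Sum>m\<in>{m. m \<in> {..<n} \<and> \<sigma> m = m'}. A i m * x!(\<sigma> m)))"
        by (intro sum.cong refl) (auto simp: sum_distrib_right)
      also have "\<dots> = (\<Sum>m<n. A i m * x!(\<sigma> m))"
        by (rule sum.group) (use assms(2) in auto)
      finally show ?thesis by simp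
    qed
    then show "\<theta> (map (\<lambda>m. x!(\<sigma> m)) [0..<n]) = map (\<lambda>i. b i + (\<Sum>m'<n'. (\<Sum>m\<in>{m. m < n \<and> \<sigma> m = m'}. A i m) * x!m')) [0..<N]"
      using 1 by simp
  qed
qed

lemma del_map: "q < length x \<Longrightarrow> del q x = map (\<lambda>m. x!(if m < q then m else Suc m)) [0..<length x - 1]"
  by (intro nth_equalityI) (auto simp: del_length del_nth)

lemma affine_del:
  assumes "affine_lmap n N \<theta>" "q < Suc n"
  shows "affine_lmap (Suc n) N (\<lambda>x. \<theta> (del q x))"
proof -
  have "affine_lmap (Suc n) N (\<lambda>x. \<theta> (map (\<lambda>m. x!(if m < q then m else Suc m)) [0..<n]))"
    by (rule affine_select[OF assms(1)]) auto
  then obtain A b where h: "\<forall>x. length x = Suc n \<longrightarrow> \<theta> (map (\<lambda>m. x!(if m < q then m else Suc m)) [0..<n]) = map (\<lambda>i. b i + (\<Sum>m<Suc n. A i m * x!m)) [0..<N]"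
    unfolding affine_lmap_def by blast
  show ?thesis unfolding affine_lmap_def
  proof (intro exI allI impI)
    fix x :: "'a list" assume x: "length x = Suc n"
    then have "del q x = map (\<lambda>m. x!(if m < q then m else Suc m)) [0..<n]"
      using del_map[of q x] assms(2) by simp
    then show "\<theta> (del q x) = map (\<lambda>i. b i + (\<Sum>m<Suc n. A i m * x!m)) [0..<N]" using h x by simp
  qed
qed

lemma affine_upd:
  fixes \<theta> :: "'a::field list \<Rightarrow> 'a list"
  assumes "affine_lmap n N \<theta>" "p < n"
  shows "\<exists>w. length w = N \<and> (\<forall>y v. length y = n \<longrightarrow> \<theta> (y[p:=v]) = ladd (\<theta> y) (v - y!p) w)"
proof -
  obtain A b where 1: "\<forall>x. length x = n \<longrightarrow> \<theta> x = map (\<lambda>i. b i + (\<Sum>m<n. A i m * x!m)) [0..<N]"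
    using assms(1) unfolding affine_lmap_def by blast
  show ?thesis
  proof (intro exI conjI allI impI)
    show "length (map (\<lambda>i. A i p) [0..<N]) = N" by simp
    fix y :: "'a list" and v assume y: "length y = n"
    have s: "(\<Sum>m<n. A i m * y[p:=v]!m) = (\<Sum>m<n. A i m * y!m) + (v - y!p) * A i p" for i
    proof -
      have "(\<Sum>m<n. A i m * y[p:=v]!m) = (\<Sum>m<n. A i m * y!m + (if m = p then A i p * (v - y!p) else 0))"
      proof (intro sum.cong refl)
        fix m assume "m \<in> {..<n}"
        then show "A i m * y[p:=v]!m = A i m * y!m + (if m = p then A i p * (v - y!p) else 0)"
          using y by (cases "m = p") (simp_all add: right_diff_distrib)
      qed
      also have "\<dots> = (\<Sum>m<n. A i m * y!m) + (v - y!p) * A i p"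
        using assms(2) by (simp add: sum.distrib mult.commute)
      finally show ?thesis .
    qed
    show "\<theta> (y[p:=v]) = ladd (\<theta> y) (v - y!p) (map (\<lambda>i. A i p) [0..<N])"
    proof -
      have e1: "\<theta> y = map (\<lambda>i. b i + (\<Sum>m<n. A i m * y!m)) [0..<N]" using 1 y by blast
      have e2: "\<theta> (y[p:=v]) = map (\<lambda>i. b i + (\<Sum>m<n. A i m * y[p:=v]!m)) [0..<N]" using 1 y by simp
      show ?thesis unfolding e1 e2 ladd_def
      proof (intro nth_equalityI)
        fix i assume "i < length (map (\<lambda>i. b i + (\<Sum>m<n. A i m * y[p:=v]!m)) [0..<N])"
        then have i: "i < N" by simp
        show "map (\<lambda>i. b i + (\<Sum>m<n. A i m * y[p:=v]!m)) [0..<N] ! i =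
          map2 (\<lambda>a b. a + (v - y!p) * b) (map (\<lambda>i. b i + (\<Sum>m<n. A i m * y!m)) [0..<N]) (map (\<lambda>i. A i p) [0..<N]) ! i"
          using i s[of i] by (simp add: algebra_simps)
      qed simp
    qed
  qed
qed


lemma openin_ltop: "openin ltop = lopen"
  unfolding ltop_def by (rule topology_inverse'[OF istopology_lopen])

lemma lopen_UNIV: "lopen UNIV"
  unfolding lopen_def by (intro ballI exI[of _ "\<lambda>i. UNIV"]) auto

lemma topspace_ltop: "topspace ltop = UNIV"
  unfolding topspace_def openin_ltop using lopen_UNIV by auto

lemma tf_infinite:
  assumes tf: "topological_field TYPE('k::{field,t2_space})"
    and S: "open (S::'k set)" "S \<noteq> {}"
  shows "infinite S"
proof
  assume fin: "finite S"
  obtain a where a: "a \<in> S" using S by auto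
  have "closed (S - {a})" using fin by (intro finite_imp_closed) auto
  then have oa: "open {a}"
    using open_Diff[OF S(1), of "S - {a}"] a by (metis Diff_Diff_Int Int_absorb1 empty_subsetI insert_subset)
  have c: "continuous_on UNIV (\<lambda>p::'k\<times>'k. fst p + snd p)" using tf by (simp add: topological_field_def)
  have "continuous_on UNIV (\<lambda>x::'k. (\<lambda>p::'k\<times>'k. fst p + snd p) (x, a))"
    by (rule continuous_on_compose2[OF c]) (auto intro!: continuous_intros)
  then have "open ((\<lambda>x::'k. x + a) -` {a})" using open_vimage[OF oa] by simp
  moreover have "(\<lambda>x::'k. x + a) -` {a} = {0}" by auto
  ultimately show False using tf by (simp add: topological_field_def)
qed

lemma cm_add:
  assumes tf: "topological_field TYPE('k::{field,t2_space})"
    and "continuous_map X euclidean (g::_\<Rightarrow>'k)" "continuous_map X euclidean h"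
  shows "continuous_map X euclidean (\<lambda>x. g x + h x)"
proof -
  have "continuous_map X euclidean (\<lambda>x. (g x, h x))"
    using continuous_map_pairedI[OF assms(2,3)] by simp
  moreover have "continuous_map euclidean euclidean (\<lambda>p::'k\<times>'k. fst p + snd p)"
    using tf by (simp add: topological_field_def)
  ultimately have "continuous_map X euclidean ((\<lambda>p::'k\<times>'k. fst p + snd p) \<circ> (\<lambda>x. (g x, h x)))"
    by (rule continuous_map_compose)
  then show ?thesis by (simp add: o_def)
qed

lemma cm_mult:
  assumes tf: "topological_field TYPE('k::{field,t2_space})"
    and "continuous_map X euclidean (g::_\<Rightarrow>'k)" "continuous_map X euclidean h"
  shows "continuous_map X euclidean (\<lambda>x. g x * h x)"
proof -
  have "continuous_map X euclidean (\<lambda>x. (g x, h x))"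
    using continuous_map_pairedI[OF assms(2,3)] by simp
  moreover have "continuous_map euclidean euclidean (\<lambda>p::'k\<times>'k. fst p * snd p)"
    using tf by (simp add: topological_field_def)
  ultimately have "continuous_map X euclidean ((\<lambda>p::'k\<times>'k. fst p * snd p) \<circ> (\<lambda>x. (g x, h x)))"
    by (rule continuous_map_compose)
  then show ?thesis by (simp add: o_def)
qed

lemma cm_sum:
  fixes n :: nat
  assumes tf: "topological_field TYPE('k::{field,t2_space})"
    and "\<forall>m<n. continuous_map X euclidean (f m :: _ \<Rightarrow> 'k)"
  shows "continuous_map X euclidean (\<lambda>x. \<Sum>m<n. f m x)"
  using assms(2)
proof (induction n)
  case 0 then show ?case by simp
next
  case (Suc n)
  then show ?case by (simp add: cm_add[OF tf])
qed

lemma cm_proj: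
  assumes "m < n" "S \<subseteq> {x. length x = n}"
  shows "continuous_map (subtopology ltop S) euclidean (\<lambda>x. x!m)"
  unfolding continuous_map_def
proof (intro conjI allI impI)
  show "(\<lambda>x. x!m) \<in> topspace (subtopology ltop S) \<rightarrow> topspace euclidean" by simp
  fix U :: "'a set" assume "openin euclidean U"
  then have oU: "open U" by simp
  have "lopen {x. length x = n \<and> x!m \<in> U}"
    unfolding lopen_def
  proof
    fix x assume x: "x \<in> {x. length x = n \<and> x!m \<in> U}"
    show "\<exists>A. (\<forall>i<length x. open (A i) \<and> x!i \<in> A i) \<and> {y. length y = length x \<and> (\<forall>i<length x. y!i \<in> A i)} \<subseteq> {x. length x = n \<and> x!m \<in> U}"
      by (rule exI[of _ "\<lambda>i. if i = m then U else UNIV"]) (use x oU assms(1) in auto)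
  qed
  then show "openin (subtopology ltop S) {x \<in> topspace (subtopology ltop S). x!m \<in> U}"
    unfolding openin_subtopology openin_ltop topspace_subtopology topspace_ltop
    by (intro exI[of _ "{x. length x = n \<and> x!m \<in> U}"]) (use assms(2) in auto)
qed

lemma cm_into:
  fixes \<theta> :: "'a \<Rightarrow> 'b::topological_space list"
  assumes "\<forall>x\<in>topspace X. length (\<theta> x) = N" "\<forall>i<N. continuous_map X euclidean (\<lambda>x. \<theta> x ! i)"
  shows "continuous_map X ltop \<theta>"
  unfolding continuous_map_def
proof (intro conjI allI impI)
  show "\<theta> \<in> topspace X \<rightarrow> topspace ltop" by (simp add: topspace_ltop)
  fix Ob :: "'b list set" assume "openin ltop Ob"
  then have Ob: "lopen Ob" by (simp add: openin_ltop)
  show "openin X {x \<in> topspace X. \<theta> x \<in> Ob}"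
  proof (subst openin_subopen, intro ballI)
    fix x assume x: "x \<in> {x \<in> topspace X. \<theta> x \<in> Ob}"
    then have lx: "length (\<theta> x) = N" using assms(1) by auto
    obtain A where A: "\<forall>i<N. open (A i) \<and> \<theta> x!i \<in> A i"
      "{y. length y = N \<and> (\<forall>i<N. y!i \<in> A i)} \<subseteq> Ob"
      using Ob x lx unfolding lopen_def by force
    define T where "T = (\<Inter>i\<in>{..<N}. {z \<in> topspace X. \<theta> z ! i \<in> A i}) \<inter> topspace X"
    have oi: "openin X {z \<in> topspace X. \<theta> z ! i \<in> A i}" if i: "i < N" for i
    proof -
      have "openin euclidean (A i)" using A(1) i by (metis open_openin)
      then show ?thesis using openin_continuous_map_preimage[of X euclidean "\<lambda>x. \<theta> x ! i" "A i"] assms(2) i by blast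
    qed
    have "openin X T" unfolding T_def
      by (rule openin_INT) (use oi in auto)
    moreover have "x \<in> T" using x A by (auto simp: T_def)
    moreover have "T \<subseteq> {x \<in> topspace X. \<theta> x \<in> Ob}"
      using A(2) assms(1) by (auto simp: T_def)
    ultimately show "\<exists>T. openin X T \<and> x \<in> T \<and> T \<subseteq> {x \<in> topspace X. \<theta> x \<in> Ob}" by blast
  qed
qed

lemma cm_affine:
  assumes tf: "topological_field TYPE('k::{field,t2_space})"
    and aff: "affine_lmap n N (\<theta> :: 'k list \<Rightarrow> 'k list)" and S: "S \<subseteq> {x. length x = n}"
  shows "continuous_map (subtopology ltop S) ltop \<theta>"
proof -
  obtain A b where 1: "\<forall>x. length x = n \<longrightarrow> \<theta> x = map (\<lambda>i. b i + (\<Sum>m<n. A i m * x!m)) [0..<N]"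
    using aff unfolding affine_lmap_def by blast
  have "continuous_map (subtopology ltop S) ltop (\<lambda>x. map (\<lambda>i. b i + (\<Sum>m<n. A i m * x!m)) [0..<N])"
  proof (rule cm_into)
    show "\<forall>x\<in>topspace (subtopology ltop S). length (map (\<lambda>i. b i + (\<Sum>m<n. A i m * x!m)) [0..<N]) = N" by simp
    show "\<forall>i<N. continuous_map (subtopology ltop S) euclidean (\<lambda>x. map (\<lambda>i. b i + (\<Sum>m<n. A i m * x!m)) [0..<N] ! i)"
    proof (intro allI impI)
      fix i assume i: "i < N"
      have "continuous_map (subtopology ltop S) euclidean (\<lambda>x. b i + (\<Sum>m<n. A i m * x!m))"
        by (intro cm_add[OF tf] continuous_map_const[THEN iffD2] cm_sum[OF tf] allI impI cm_mult[OF tf] cm_proj[OF _ S]) auto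
      then show "continuous_map (subtopology ltop S) euclidean (\<lambda>x. map (\<lambda>i. b i + (\<Sum>m<n. A i m * x!m)) [0..<N] ! i)"
        using i by simp
    qed
  qed
  then show ?thesis
    by (rule continuous_map_eq) (use 1 S in \<open>auto simp: topspace_ltop\<close>)
qed

lemma ext_unique:
  fixes h1 h2 :: "'a::topological_space list \<Rightarrow> 'f::t2_space"
  assumes c1: "continuous_map (subtopology ltop S) euclidean h1"
    and c2: "continuous_map (subtopology ltop S) euclidean h2"
    and dense: "\<forall>x\<in>S. \<forall>Ob. lopen Ob \<longrightarrow> x \<in> Ob \<longrightarrow> (\<exists>y\<in>D. y \<in> Ob)"
    and DS: "D \<subseteq> S" and eq: "\<forall>x\<in>D. h1 x = h2 x" and x: "x \<in> S"
  shows "h1 x = h2 x"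
proof (rule ccontr)
  assume "h1 x \<noteq> h2 x"
  then obtain G1 G2 where G: "open G1" "open G2" "h1 x \<in> G1" "h2 x \<in> G2" "G1 \<inter> G2 = {}"
    using separation_t2[of "h1 x" "h2 x"] by metis
  have o1: "openin (subtopology ltop S) {z \<in> topspace (subtopology ltop S). h1 z \<in> G1}"
    using openin_continuous_map_preimage[OF c1] G(1) by simp
  have o2: "openin (subtopology ltop S) {z \<in> topspace (subtopology ltop S). h2 z \<in> G2}"
    using openin_continuous_map_preimage[OF c2] G(2) by simp
  have "openin (subtopology ltop S) ({z \<in> topspace (subtopology ltop S). h1 z \<in> G1} \<inter> {z \<in> topspace (subtopology ltop S). h2 z \<in> G2})"
    using o1 o2 by (rule openin_Int)
  then obtain T where T: "lopen T" "{z \<in> topspace (subtopology ltop S). h1 z \<in> G1} \<inter> {z \<in> topspace (subtopology ltop S). h2 z \<in> G2} = T \<inter> S"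
    unfolding openin_subtopology openin_ltop by blast
  have "x \<in> {z \<in> topspace (subtopology ltop S). h1 z \<in> G1} \<inter> {z \<in> topspace (subtopology ltop S). h2 z \<in> G2}"
    using x G(3,4) by (simp add: topspace_ltop)
  then have "x \<in> T \<inter> S" by (simp only: T(2))
  then have "x \<in> T" by simp
  then obtain y where y: "y \<in> D" "y \<in> T" using dense x T(1) by metis
  then have "y \<in> T \<inter> S" using DS by auto
  then have "y \<in> {z \<in> topspace (subtopology ltop S). h1 z \<in> G1} \<inter> {z \<in> topspace (subtopology ltop S). h2 z \<in> G2}"
    by (simp only: T(2))
  then have "h1 y \<in> G1" "h2 y \<in> G2" by simp_all
  then show False using eq y(1) G(5) by auto
qed


lemma choose_distinct:
  assumes "\<forall>p<n. infinite (S p)"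
  shows "\<exists>y. length y = n \<and> distinct y \<and> (\<forall>p<n. y!p \<in> S p)"
  using assms
proof (induction n)
  case 0 then show ?case by simp
next
  case (Suc n)
  then obtain y where y: "length y = n" "distinct y" "\<forall>p<n. y!p \<in> S p" by auto
  have "infinite (S n - set y)" using Suc.prems by (intro Diff_infinite_finite) auto
  then obtain z where z: "z \<in> S n" "z \<notin> set y" using infinite_imp_nonempty by blast
  show ?case
    by (rule exI[of _ "y @ [z]"]) (use y z in \<open>auto simp: nth_append less_Suc_eq\<close>)
qed

lemma dens_gen:
  fixes x :: "'k::{field,t2_space} list"
  assumes tf: "topological_field TYPE('k)"
    and x: "x \<in> Uang U \<alpha>" and Ob: "lopen Ob" "x \<in> Ob"
    and V: "\<forall>p<length x. open (V p) \<and> (\<forall>B. open B \<longrightarrow> x!p \<in> B \<longrightarrow> B \<inter> V p \<noteq> {})"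
    and Vsub: "\<forall>y. length y = length x \<longrightarrow> (\<forall>p<length x. y!p \<in> V p) \<longrightarrow> y \<in> Uang U \<alpha>"
  shows "\<exists>y\<in>Urev U \<alpha>. y \<in> Ob"
proof -
  obtain A where A: "\<forall>i<length x. open (A i) \<and> x!i \<in> A i"
      "{y. length y = length x \<and> (\<forall>i<length x. y!i \<in> A i)} \<subseteq> Ob"
    using Ob unfolding lopen_def by blast
  have "\<forall>p<length x. infinite (A p \<inter> V p)"
  proof (intro allI impI)
    fix p assume p: "p < length x"
    show "infinite (A p \<inter> V p)" using A(1) V p by (intro tf_infinite[OF tf]) auto
  qed
  then obtain y where y: "length y = length x" "distinct y" "\<forall>p<length x. y!p \<in> A p \<inter> V p"
    using choose_distinct[of "length x" "\<lambda>p. A p \<inter> V p"] by auto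
  have yO: "y \<in> Ob" using A(2) y by auto
  have yU: "y \<in> Uang U \<alpha>" using Vsub y by auto
  have lx: "length x = length \<alpha> + sum_list \<alpha>" using x by (simp add: Uang_def)
  have "y \<in> Urev U \<alpha>" unfolding Urev_def
  proof (intro CollectI conjI yU allI impI)
    fix l m m' assume l: "l < length \<alpha>" and m: "m \<le> \<alpha>!l" and m': "m' \<le> \<alpha>!l" and ne: "m \<noteq> m'"
    have "off \<alpha> l + m < length y" "off \<alpha> l + m' < length y" using off_lt[OF l m] off_lt[OF l m'] y lx by auto
    then show "blk \<alpha> y l m \<noteq> blk \<alpha> y l m'" unfolding blk_off using nth_eq_iff_index_eq[OF y(2)] ne by simp
  qed
  then show ?thesis using yO by blast
qed

lemma dens_open:
  fixes x :: "'k::{field,t2_space} list"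
  assumes U: "lopen U" and x: "x \<in> Uang U \<alpha>"
  shows "\<exists>V. (\<forall>p<length x. open (V p) \<and> (\<forall>B. open B \<longrightarrow> x!p \<in> B \<longrightarrow> B \<inter> V p \<noteq> {})) \<and>
             (\<forall>y. length y = length x \<longrightarrow> (\<forall>p<length x. y!p \<in> V p) \<longrightarrow> y \<in> Uang U \<alpha>)"
proof -
  have lx: "length x = length \<alpha> + sum_list \<alpha>" and P: "\<forall>\<iota>\<in>midx \<alpha>. pt \<alpha> x \<iota> \<in> U"
    using x by (auto simp: Uang_def)
  have lpt: "length (pt \<alpha> z \<iota>) = length \<alpha>" for z \<iota> by (simp add: pt_def)
  have ptn: "l < length \<alpha> \<Longrightarrow> pt \<alpha> z \<iota> ! l = z ! (off \<alpha> l + \<iota>!l)" for z \<iota> l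
    by (simp add: pt_def blk_off)
  have ex: "\<forall>\<iota>\<in>midx \<alpha>. \<exists>B. (\<forall>l<length \<alpha>. open (B l) \<and> pt \<alpha> x \<iota> ! l \<in> B l) \<and>
          {y. length y = length \<alpha> \<and> (\<forall>l<length \<alpha>. y!l \<in> B l)} \<subseteq> U"
  proof
    fix \<iota> assume "\<iota> \<in> midx \<alpha>"
    then have "pt \<alpha> x \<iota> \<in> U" using P by blast
    then obtain B where B: "\<forall>i<length (pt \<alpha> x \<iota>). open (B i) \<and> pt \<alpha> x \<iota> ! i \<in> B i"
        "{y. length y = length (pt \<alpha> x \<iota>) \<and> (\<forall>i<length (pt \<alpha> x \<iota>). y!i \<in> B i)} \<subseteq> U"
      using U unfolding lopen_def by blast
    show "\<exists>B. (\<forall>l<length \<alpha>. open (B l) \<and> pt \<alpha> x \<iota> ! l \<in> B l) \<and>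
          {y. length y = length \<alpha> \<and> (\<forall>l<length \<alpha>. y!l \<in> B l)} \<subseteq> U"
      using B unfolding lpt by blast
  qed
  from bchoice[OF ex] obtain Bf where Bf: "\<forall>\<iota>\<in>midx \<alpha>. (\<forall>l<length \<alpha>. open (Bf \<iota> l) \<and> pt \<alpha> x \<iota> ! l \<in> Bf \<iota> l) \<and>
          {y. length y = length \<alpha> \<and> (\<forall>l<length \<alpha>. y!l \<in> Bf \<iota> l)} \<subseteq> U"
    by blast
  define I where "I p = {(\<iota>, l). \<iota> \<in> midx \<alpha> \<and> l < length \<alpha> \<and> off \<alpha> l + \<iota>!l = p}" for p
  define V where "V p = \<Inter> ((\<lambda>(\<iota>, l). Bf \<iota> l) ` I p)" for p
  have finI: "finite (I p)" for p
    by (rule finite_subset[of _ "midx \<alpha> \<times> {..<length \<alpha>}"]) (auto simp: I_def finite_midx)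
  have xV: "x!p \<in> V p" for p
    unfolding V_def
  proof (rule InterI)
    fix W assume "W \<in> (\<lambda>(\<iota>, l). Bf \<iota> l) ` I p"
    then obtain \<iota> l where il: "\<iota> \<in> midx \<alpha>" "l < length \<alpha>" "off \<alpha> l + \<iota>!l = p" "W = Bf \<iota> l"
      unfolding I_def by auto
    then have "pt \<alpha> x \<iota> ! l \<in> Bf \<iota> l" using Bf by blast
    moreover have "pt \<alpha> x \<iota> ! l = x!p" using ptn[OF il(2), of x \<iota>] il(3) by simp
    ultimately show "x!p \<in> W" using il(4) by simp
  qed
  have c1: "\<forall>p<length x. open (V p) \<and> (\<forall>B. open B \<longrightarrow> x!p \<in> B \<longrightarrow> B \<inter> V p \<noteq> {})"
  proof (rule allI, rule impI, rule conjI)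
    fix p assume "p < length x"
    show "open (V p)" unfolding V_def
    proof (rule open_Inter)
      show "finite ((\<lambda>(\<iota>, l). Bf \<iota> l) ` I p)" using finI by blast
      show "\<forall>T\<in>(\<lambda>(\<iota>, l). Bf \<iota> l) ` I p. open T"
      proof
        fix W assume "W \<in> (\<lambda>(\<iota>, l). Bf \<iota> l) ` I p"
        then obtain \<iota> l where il: "\<iota> \<in> midx \<alpha>" "l < length \<alpha>" "W = Bf \<iota> l"
          unfolding I_def by auto
        then show "open W" using Bf by blast
      qed
    qed
    show "\<forall>B. open B \<longrightarrow> x!p \<in> B \<longrightarrow> B \<inter> V p \<noteq> {}" using xV by auto
  qed
  have c2: "\<forall>y. length y = length x \<longrightarrow> (\<forall>p<length x. y!p \<in> V p) \<longrightarrow> y \<in> Uang U \<alpha>"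
  proof (intro allI impI)
    fix y assume y: "length y = length x" "\<forall>p<length x. y!p \<in> V p"
    show "y \<in> Uang U \<alpha>" unfolding Uang_def
    proof (intro CollectI conjI ballI)
      show "length y = length \<alpha> + sum_list \<alpha>" using y lx by simp
      fix \<iota> assume i: "\<iota> \<in> midx \<alpha>"
      have "pt \<alpha> y \<iota> \<in> {y. length y = length \<alpha> \<and> (\<forall>l<length \<alpha>. y!l \<in> Bf \<iota> l)}"
      proof (intro CollectI conjI allI impI)
        show "length (pt \<alpha> y \<iota>) = length \<alpha>" by (rule lpt)
        fix l assume l: "l < length \<alpha>"
        have il: "\<iota>!l \<le> \<alpha>!l" using i l by (simp add: midx_def)
        have p: "off \<alpha> l + \<iota>!l < length x" using off_lt[OF l il] lx by simp
        have "(\<iota>, l) \<in> I (off \<alpha> l + \<iota>!l)" using i l by (simp add: I_def)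
        then have "V (off \<alpha> l + \<iota>!l) \<subseteq> Bf \<iota> l" unfolding V_def by auto
        moreover have "y ! (off \<alpha> l + \<iota>!l) \<in> V (off \<alpha> l + \<iota>!l)" using y(2) p by blast
        moreover have "pt \<alpha> y \<iota> ! l = y ! (off \<alpha> l + \<iota>!l)" by (rule ptn[OF l])
        ultimately show "pt \<alpha> y \<iota> ! l \<in> Bf \<iota> l" by auto
      qed
      then show "pt \<alpha> y \<iota> \<in> U" using Bf i by blast
    qed
  qed
  show ?thesis by (intro exI[of _ V] conjI c1 c2)
qed

lemma off_Cons0: "off (a # \<alpha>) 0 = 0" by (simp add: off_def)
lemma off_ConsS: "off (a # \<alpha>) (Suc l) = Suc a + off \<alpha> l" by (simp add: off_def)

lemma blk_exists: "p < length \<alpha> + sum_list \<alpha> \<Longrightarrow> \<exists>l<length \<alpha>. off \<alpha> l \<le> p \<and> p < off \<alpha> (Suc l)"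
proof (induction \<alpha> arbitrary: p)
  case Nil then show ?case by simp
next
  case (Cons a \<alpha>)
  show ?case
  proof (cases "p < Suc a")
    case True
    have "0 < length (a # \<alpha>)" "off (a # \<alpha>) 0 \<le> p" "p < off (a # \<alpha>) (Suc 0)"
      using True by (simp_all add: off_Cons0 off_ConsS off_def)
    then show ?thesis by blast
  next
    case False
    then have "p - Suc a < length \<alpha> + sum_list \<alpha>" using Cons.prems by simp
    then obtain l where l: "l < length \<alpha>" "off \<alpha> l \<le> p - Suc a" "p - Suc a < off \<alpha> (Suc l)"
      using Cons.IH by blast
    have "Suc l < length (a # \<alpha>)" using l by simp
    moreover have "off (a # \<alpha>) (Suc l) \<le> p" unfolding off_ConsS using l(2) False by linarith
    moreover have "p < off (a # \<alpha>) (Suc (Suc l))" unfolding off_ConsS using l(3) False by linarith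
    ultimately show ?thesis by blast
  qed
qed

lemma blk_unique:
  assumes "l < length \<alpha>" "l' < length \<alpha>" "off \<alpha> l \<le> p" "p < off \<alpha> (Suc l)" "off \<alpha> l' \<le> p" "p < off \<alpha> (Suc l')"
  shows "l = l'"
proof (rule ccontr)
  assume "l \<noteq> l'"
  then consider "l < l'" | "l' < l" by linarith
  then show False
  proof cases
    case 1 then have "off \<alpha> (Suc l) \<le> off \<alpha> l'" using assms by (intro off_mono) auto
    then show False using assms by simp
  next
    case 2 then have "off \<alpha> (Suc l') \<le> off \<alpha> l" using assms by (intro off_mono) auto
    then show False using assms by simp
  qed
qed

lemma dens_prod:
  fixes x :: "'k::{field,t2_space} list"
  assumes Us: "\<forall>i<length \<alpha>. Us i \<subseteq> closure (interior (Us i))"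
    and U: "U = {x. length x = length \<alpha> \<and> (\<forall>i<length \<alpha>. x!i \<in> Us i)}"
    and x: "x \<in> Uang U \<alpha>"
  shows "\<exists>V. (\<forall>p<length x. open (V p) \<and> (\<forall>B. open B \<longrightarrow> x!p \<in> B \<longrightarrow> B \<inter> V p \<noteq> {})) \<and>
             (\<forall>y. length y = length x \<longrightarrow> (\<forall>p<length x. y!p \<in> V p) \<longrightarrow> y \<in> Uang U \<alpha>)"
proof -
  have lx: "length x = length \<alpha> + sum_list \<alpha>" and P: "\<forall>\<iota>\<in>midx \<alpha>. pt \<alpha> x \<iota> \<in> U"
    using x by (auto simp: Uang_def)
  have lpt: "length (pt \<alpha> z \<iota>) = length \<alpha>" for z \<iota> by (simp add: pt_def)
  have ptn: "l < length \<alpha> \<Longrightarrow> pt \<alpha> z \<iota> ! l = z ! (off \<alpha> l + \<iota>!l)" for z \<iota> l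
    by (simp add: pt_def blk_off)
  define \<beta> where "\<beta> p = (THE l. l < length \<alpha> \<and> off \<alpha> l \<le> p \<and> p < off \<alpha> (Suc l))" for p
  have \<beta>: "\<beta> p < length \<alpha> \<and> off \<alpha> (\<beta> p) \<le> p \<and> p < off \<alpha> (Suc (\<beta> p))" if "p < length x" for p
  proof -
    have "p < length \<alpha> + sum_list \<alpha>" using that lx by simp
    then obtain l where l: "l < length \<alpha>" "off \<alpha> l \<le> p" "p < off \<alpha> (Suc l)" using blk_exists[of p \<alpha>] by blast
    have "\<beta> p = l" unfolding \<beta>_def using l blk_unique[of l \<alpha>] by (intro the_equality) auto
    then show ?thesis using l by simp
  qed
  have \<beta>u: "\<beta> (off \<alpha> l + m) = l" if "l < length \<alpha>" "m \<le> \<alpha>!l" for l m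
  proof -
    have p: "off \<alpha> l + m < length x" using off_lt[OF that] lx by simp
    have "off \<alpha> l + m < off \<alpha> (Suc l)" using that by (simp add: off_Suc)
    then show ?thesis using \<beta>[OF p] blk_unique[of l \<alpha> "\<beta> (off \<alpha> l + m)" "off \<alpha> l + m"] that by auto
  qed
  have xU: "x!p \<in> Us (\<beta> p)" if p: "p < length x" for p
  proof -
    define l where "l = \<beta> p"
    define m where "m = p - off \<alpha> l"
    have l: "l < length \<alpha>" and lp: "off \<alpha> l \<le> p" "p < off \<alpha> (Suc l)" using \<beta>[OF p] by (auto simp: l_def)
    have m: "m \<le> \<alpha>!l" using lp l by (simp add: m_def off_Suc)
    define \<iota> where "\<iota> = (replicate (length \<alpha>) (0::nat))[l := m]"
    have i: "\<iota> \<in> midx \<alpha>" using l m by (auto simp: midx_def \<iota>_def nth_list_update)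
    have f1: "pt \<alpha> x \<iota> ! l \<in> Us l" using P i U l by auto
    have il: "\<iota>!l = m" using l by (simp add: \<iota>_def)
    have f2: "pt \<alpha> x \<iota> ! l = x!(off \<alpha> l + m)" by (simp add: ptn[OF l] il)
    have f3: "x!(off \<alpha> l + m) = x!p" using lp by (simp add: m_def)
    show ?thesis using f1 f2 f3 unfolding l_def by simp
  qed
  define V where "V p = interior (Us (\<beta> p))" for p
  have c1: "\<forall>p<length x. open (V p) \<and> (\<forall>B. open B \<longrightarrow> x!p \<in> B \<longrightarrow> B \<inter> V p \<noteq> {})"
  proof (rule allI, rule impI, rule conjI)
    fix p assume p: "p < length x"
    show "open (V p)" by (simp add: V_def)
    show "\<forall>B. open B \<longrightarrow> x!p \<in> B \<longrightarrow> B \<inter> V p \<noteq> {}"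
    proof (intro allI impI)
      fix B :: "'k set" assume B: "open B" "x!p \<in> B"
      have "x!p \<in> closure (interior (Us (\<beta> p)))" using xU[OF p] Us \<beta>[OF p] by blast
      then have "B \<inter> closure (interior (Us (\<beta> p))) \<noteq> {}" using B by auto
      then show "B \<inter> V p \<noteq> {}" unfolding V_def using open_Int_closure_eq_empty[OF B(1)] by blast
    qed
  qed
  have c2: "\<forall>y. length y = length x \<longrightarrow> (\<forall>p<length x. y!p \<in> V p) \<longrightarrow> y \<in> Uang U \<alpha>"
  proof (intro allI impI)
    fix y assume y: "length y = length x" "\<forall>p<length x. y!p \<in> V p"
    show "y \<in> Uang U \<alpha>" unfolding Uang_def
    proof (intro CollectI conjI ballI)
      show "length y = length \<alpha> + sum_list \<alpha>" using y lx by simp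
      fix \<iota> assume i: "\<iota> \<in> midx \<alpha>"
      have "\<forall>l<length \<alpha>. pt \<alpha> y \<iota> ! l \<in> Us l"
      proof (intro allI impI)
        fix l assume l: "l < length \<alpha>"
        have il: "\<iota>!l \<le> \<alpha>!l" using i l by (simp add: midx_def)
        have p: "off \<alpha> l + \<iota>!l < length x" using off_lt[OF l il] lx by simp
        have "y ! (off \<alpha> l + \<iota>!l) \<in> interior (Us l)" using y(2) p \<beta>u[OF l il] by (auto simp: V_def)
        moreover have "pt \<alpha> y \<iota> ! l = y ! (off \<alpha> l + \<iota>!l)" by (rule ptn[OF l])
        ultimately show "pt \<alpha> y \<iota> ! l \<in> Us l" using interior_subset by auto
      qed
      then show "pt \<alpha> y \<iota> \<in> U" using U lpt by auto
    qed
  qed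
  show ?thesis by (intro exI[of _ V] conjI c1 c2)
qed


lemma FF_cong:
  assumes "\<And>l m. l < length \<alpha> \<Longrightarrow> m \<le> \<alpha>!l \<Longrightarrow> X l m = Y l m"
  shows "FF smul \<alpha> X f = FF smul \<alpha> Y f"
  unfolding FF_def
proof (intro sum.cong refl)
  fix \<iota> assume i: "\<iota> \<in> midx \<alpha>"
  then have il: "\<And>l. l < length \<alpha> \<Longrightarrow> \<iota>!l \<le> \<alpha>!l" by (simp add: midx_def)
  have c: "coef \<alpha> X \<iota> = coef \<alpha> Y \<iota>" unfolding coef_def
    by (intro prod.cong refl gg_cong) (auto simp: assms il)
  have m: "map (\<lambda>l. X l (\<iota>!l)) [0..<length \<alpha>] = map (\<lambda>l. Y l (\<iota>!l)) [0..<length \<alpha>]"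
    by (intro map_cong refl) (auto simp: assms il)
  show "smul (coef \<alpha> X \<iota>) (f (map (\<lambda>l. X l (\<iota>!l)) [0..<length \<alpha>])) =
                   smul (coef \<alpha> Y \<iota>) (f (map (\<lambda>l. Y l (\<iota>!l)) [0..<length \<alpha>]))" by (simp only: c m)
qed

lemma base_case:
  fixes smul :: "'k::{field,t2_space} \<Rightarrow> 'f::{ab_group_add,t2_space} \<Rightarrow> 'f"
  assumes vs: "vector_space smul" and len: "length \<alpha> = d" and s0: "sum_list \<alpha> = 0"
  shows "\<forall>x\<in>Uang U \<alpha>. x \<in> U \<and> frev smul \<alpha> f x = f x"
proof
  interpret vs: vector_space smul by (rule vs)
  fix x assume x: "x \<in> Uang U \<alpha>"
  have a0: "\<And>l. l < d \<Longrightarrow> \<alpha>!l = 0" using s0 len by (auto simp: sum_list_eq_0_iff)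
  define z where "z = replicate d (0::nat)"
  have midx: "midx \<alpha> = {z}"
  proof (intro set_eqI iffI)
    fix \<iota> assume "\<iota> \<in> midx \<alpha>"
    then show "\<iota> \<in> {z}" using a0 len by (auto simp: midx_def z_def intro!: nth_equalityI)
  next
    fix \<iota> assume "\<iota> \<in> {z}"
    then show "\<iota> \<in> midx \<alpha>" using a0 len by (auto simp: midx_def z_def)
  qed
  have lx: "length x = d" using x len s0 by (simp add: Uang_def)
  have offl: "l \<le> d \<Longrightarrow> off \<alpha> l = l" for l using a0 len by (simp add: off_sum)
  have ptz: "pt \<alpha> x z = x"
    unfolding pt_def using lx len offl by (intro nth_equalityI) (auto simp: blk_off z_def)
  have xU: "x \<in> U" using x ptz midx by (auto simp: Uang_def)
  have "frev smul \<alpha> f x = smul (\<Prod>l<length \<alpha>. \<Prod>m\<in>{0..\<alpha>!l} - {z!l}. inverse (blk \<alpha> x l (z!l) - blk \<alpha> x l m)) (f (pt \<alpha> x z))"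
    unfolding frev_def midx by simp
  also have "(\<Prod>l<length \<alpha>. \<Prod>m\<in>{0..\<alpha>!l} - {z!l}. inverse (blk \<alpha> x l (z!l) - blk \<alpha> x l m)) = 1"
    using a0 len by (intro prod.neutral ballI) (simp add: z_def)
  finally show "x \<in> U \<and> frev smul \<alpha> f x = f x" using xU ptz by simp
qed


lemma main_ind:
  fixes smul :: "'k::{field,t2_space} \<Rightarrow> 'f::{ab_group_add,t2_space} \<Rightarrow> 'f"
  assumes vs: "vector_space smul"
  shows "\<forall>\<alpha>. length \<alpha> = d \<and> sum_list \<alpha> = j \<longrightarrow>
     (\<exists>\<theta>. affine_lmap (d + j) (brdim d j) \<theta> \<and> (\<forall>x\<in>Uang U \<alpha>. \<theta> x \<in> brj j U) \<and>
          (\<forall>f. Ck smul j U f \<longrightarrow> (\<forall>x\<in>Urev U \<alpha>. frev smul \<alpha> f x = dj smul j U f (\<theta> x))))"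
proof (induction j)
  case 0
  show ?case
  proof (intro allI impI)
    fix \<alpha> :: "nat list" assume a: "length \<alpha> = d \<and> sum_list \<alpha> = 0"
    have B: "\<forall>x\<in>Uang U \<alpha>. x \<in> U \<and> frev smul \<alpha> f x = f x" for f
      by (rule base_case[OF vs]) (use a in auto)
    show "\<exists>\<theta>. affine_lmap (d + 0) (brdim d 0) \<theta> \<and> (\<forall>x\<in>Uang U \<alpha>. \<theta> x \<in> brj 0 U) \<and>
          (\<forall>f. Ck smul 0 U f \<longrightarrow> (\<forall>x\<in>Urev U \<alpha>. frev smul \<alpha> f x = dj smul 0 U f (\<theta> x)))"
    proof (intro exI[of _ "\<lambda>x. x"] conjI ballI allI impI)
      show "affine_lmap (d + 0) (brdim d 0) (\<lambda>x. x)" using affine_id by simp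
      fix x assume "x \<in> Uang U \<alpha>" then show "x \<in> brj 0 U" using B by auto
    next
      fix f x assume "x \<in> Urev U \<alpha>"
      then have "x \<in> Uang U \<alpha>" by (simp add: Urev_def)
      then show "frev smul \<alpha> f x = dj smul 0 U f x" using B by auto
    qed
  qed
next
  case (Suc j)
  show ?case
  proof (intro allI impI)
    fix \<alpha> :: "nat list" assume a: "length \<alpha> = d \<and> sum_list \<alpha> = Suc j"
    have "\<exists>l0<length \<alpha>. \<alpha>!l0 \<noteq> 0"
    proof (rule ccontr)
      assume "\<not> (\<exists>l0<length \<alpha>. \<alpha>!l0 \<noteq> 0)"
      then have "sum_list \<alpha> = 0" by (auto simp: sum_list_eq_0_iff in_set_conv_nth)
      then show False using a by simp
    qed
    then obtain l0 n where l0: "l0 < length \<alpha>" and an: "\<alpha>!l0 = Suc n"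
      by (metis not0_implies_Suc)
    interpret R: redux \<alpha> l0 n by unfold_locales (fact l0, fact an)
    have a': "length R.\<alpha>' = d \<and> sum_list R.\<alpha>' = j" using a R.len' R.sum' by simp
    obtain \<theta>' where th': "affine_lmap (d + j) (brdim d j) \<theta>'" "\<forall>x\<in>Uang U R.\<alpha>'. \<theta>' x \<in> brj j U"
      "\<forall>f. Ck smul j U f \<longrightarrow> (\<forall>x\<in>Urev U R.\<alpha>'. frev smul R.\<alpha>' f x = dj smul j U f (\<theta>' x))"
      using Suc.IH a' by blast
    define N where "N = brdim d j"
    have qlt: "R.q < Suc (d + j)" using R.q_lt a by simp
    have q1: "R.q - 1 < d + j" using qlt R.q_pos by simp
    obtain w where w: "length w = N" "\<forall>y v. length y = d + j \<longrightarrow> \<theta>' (y[R.q - 1 := v]) = ladd (\<theta>' y) (v - y!(R.q - 1)) w"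
      using affine_upd[OF th'(1) q1] unfolding N_def by blast
    define \<theta> where "\<theta> x = \<theta>' (del R.q x) @ w @ [x!R.q - x!(R.q - 1)]" for x
    have aff: "affine_lmap (d + Suc j) (brdim d (Suc j)) \<theta>"
    proof -
      have "affine_lmap (Suc (d + j)) ((N + N) + 1) (\<lambda>x. (\<theta>' (del R.q x) @ w) @ [x!R.q - x!(R.q - 1)])"
        by (intro affine_append affine_del affine_const affine_diff) (use th'(1) qlt q1 w(1) in \<open>auto simp: N_def\<close>)
      then show ?thesis unfolding \<theta>_def N_def brdim_Suc by (simp add: mult_2)
    qed
    have lenx: "x \<in> Uang U \<alpha> \<Longrightarrow> length x = Suc (d + j)" for x using a by (simp add: Uang_def)
    have key: "\<theta>' ((del R.q x)[R.q - 1 := x!R.q]) = ladd (\<theta>' (del R.q x)) (x!R.q - x!(R.q - 1)) w"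
      if x: "x \<in> Uang U \<alpha>" for x
    proof -
      have lx: "length x = Suc (d + j)" using lenx[OF x] .
      have ld: "length (del R.q x) = d + j" using del_length[of R.q x] qlt lx by simp
      have "del R.q x ! (R.q - 1) = x ! (R.q - 1)" using del_nth[of R.q x "R.q - 1"] qlt lx R.q_pos q1 by simp
      then show ?thesis using w(2) ld by metis
    qed
    have inbrj: "\<theta> x \<in> br1 (brj j U) \<and> \<theta>' (del R.q x) \<in> brj j U" if x: "x \<in> Uang U \<alpha>" for x
    proof -
      have b: "\<theta>' (del R.q x) \<in> brj j U" using th'(2) R.Uang_del(1)[OF x] by blast
      have c: "\<theta>' ((del R.q x)[R.q - 1 := x!R.q]) \<in> brj j U" using th'(2) R.Uang_del(2)[OF x] by blast
      have ld: "length (del R.q x) = d + j" using del_length[of R.q x] qlt lenx[OF x] by simp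
      have lt: "length (\<theta>' (del R.q x)) = N" using affine_length[OF th'(1) ld] N_def by simp
      have "\<theta> x \<in> br1 (brj j U)"
        unfolding br1_def \<theta>_def using b c key[OF x] lt w(1) by auto
      then show ?thesis using b by simp
    qed
    show "\<exists>\<theta>. affine_lmap (d + Suc j) (brdim d (Suc j)) \<theta> \<and> (\<forall>x\<in>Uang U \<alpha>. \<theta> x \<in> brj (Suc j) U) \<and>
          (\<forall>f. Ck smul (Suc j) U f \<longrightarrow> (\<forall>x\<in>Urev U \<alpha>. frev smul \<alpha> f x = dj smul (Suc j) U f (\<theta> x)))"
    proof (intro exI[of _ \<theta>] conjI aff ballI allI impI)
      fix x assume "x \<in> Uang U \<alpha>" then show "\<theta> x \<in> brj (Suc j) U" unfolding brj_Suc using inbrj by blast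
    next
      fix f x assume f: "Ck smul (Suc j) U f" and x: "x \<in> Urev U \<alpha>"
      interpret vs: vector_space smul by (rule vs)
      have xa: "x \<in> Uang U \<alpha>" using x by (simp add: Urev_def)
      have lx: "length x = length \<alpha> + sum_list \<alpha>" using xa by (simp add: Uang_def)
      define X where "X = blk \<alpha> x"
      have dist: "\<And>m m'. m \<le> Suc n \<Longrightarrow> m' \<le> Suc n \<Longrightarrow> m \<noteq> m' \<Longrightarrow> X l0 m \<noteq> X l0 m'"
        using x l0 an by (auto simp: Urev_def X_def)
      define s where "s = x!R.q - x!(R.q - 1)"
      have sX: "s = X l0 (Suc n) - X l0 n" using R.xq[OF lx] R.xq1[OF lx] by (simp add: s_def X_def)
      have s0: "s \<noteq> 0" using dist[of "Suc n" n] sX by auto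
      have fj: "Ck smul j U f" using f Ck_Suc_mono by blast
      have C1: "C1 smul (brj j U) (dj smul j U f)"
        using Ck_shift[of smul j 1 U f] f by simp
      have ld: "length (del R.q x) = d + j" using del_length[of R.q x] qlt lenx[OF xa] by simp
      have lt: "length (\<theta>' (del R.q x)) = N" using affine_length[OF th'(1) ld] N_def by simp
      have bx: "bx (\<theta> x) = \<theta>' (del R.q x)" using lt w(1) by (simp add: bx_def \<theta>_def)
      have by': "by' (\<theta> x) = w" using lt w(1) by (simp add: by'_def \<theta>_def)
      have bt: "bt (\<theta> x) = s" by (simp add: bt_def \<theta>_def s_def)
      have "dj smul (Suc j) U f (\<theta> x) = d1 smul (brj j U) (dj smul j U f) (\<theta> x)" by (simp only: dj_Suc)
      also have "\<dots> = diffquot smul (dj smul j U f) (\<theta> x)"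
        by (rule d1_prop[OF C1]) (use inbrj[OF xa] bt s0 in auto)
      also have "\<dots> = smul (inverse s) (dj smul j U f (\<theta>' ((del R.q x)[R.q - 1 := x!R.q])) - dj smul j U f (\<theta>' (del R.q x)))"
        unfolding diffquot_def bx by' bt key[OF xa] s_def ..
      also have "dj smul j U f (\<theta>' ((del R.q x)[R.q - 1 := x!R.q])) = frev smul R.\<alpha>' f ((del R.q x)[R.q - 1 := x!R.q])"
        using th'(3) fj R.Urev_del(2)[OF x] by metis
      also have "dj smul j U f (\<theta>' (del R.q x)) = frev smul R.\<alpha>' f (del R.q x)"
        using th'(3) fj R.Urev_del(1)[OF x] by metis
      also have "frev smul R.\<alpha>' f ((del R.q x)[R.q - 1 := x!R.q]) = FF smul R.\<alpha>' (X(l0 := (X l0)(n := X l0 (Suc n)))) f"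
        unfolding frev_FF
      proof (rule FF_cong)
        fix l m assume l: "l < length R.\<alpha>'" and m: "m \<le> R.\<alpha>'!l"
        have l': "l < length \<alpha>" using l R.len' by simp
        show "blk R.\<alpha>' ((del R.q x)[R.q - 1 := x!R.q]) l m = (X(l0 := (X l0)(n := X l0 (Suc n)))) l m"
          using R.blk_dela[OF lx l' m] by (auto simp: X_def)
      qed
      also have "frev smul R.\<alpha>' f (del R.q x) = FF smul R.\<alpha>' X f"
        unfolding frev_FF
      proof (rule FF_cong)
        fix l m assume l: "l < length R.\<alpha>'" and m: "m \<le> R.\<alpha>'!l"
        have l': "l < length \<alpha>" using l R.len' by simp
        show "blk R.\<alpha>' (del R.q x) l m = X l m"
          using R.blk_del[OF lx l' m] by (simp add: X_def)
      qed
      also have "smul (inverse s) (FF smul R.\<alpha>' (X(l0 := (X l0)(n := X l0 (Suc n)))) f - FF smul R.\<alpha>' X f) = FF smul \<alpha> X f"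
        unfolding sX R.\<alpha>'_def by (rule FF_step[OF vs l0 an, of X f, OF dist, symmetric])
      also have "\<dots> = frev smul \<alpha> f x" by (simp add: frev_FF X_def)
      finally show "frev smul \<alpha> f x = dj smul (Suc j) U f (\<theta> x)" by simp
    qed
  qed
qed


theorem lemmaB4:
  fixes smul :: "'k::{field,t2_space} \<Rightarrow> 'f::{ab_group_add,t2_space} \<Rightarrow> 'f"
    and d :: nat and k :: enat and U :: "'k list set"
  assumes "topological_field TYPE('k)"
    and "topological_vector_space smul"
    and "0 < d"
    and "U \<subseteq> {x. length x = d}"
    and "openin ltop U \<or>
         (\<exists>Us :: nat \<Rightarrow> 'k set. (\<forall>i<d. Us i \<subseteq> closure (interior (Us i))) \<and>
              U = {x. length x = d \<and> (\<forall>i<d. x!i \<in> Us i)})"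
  shows "\<forall>\<alpha>. length \<alpha> = d \<and> enat (sum_list \<alpha>) \<le> k \<longrightarrow>
     (\<exists>\<theta>. affine_lmap (d + sum_list \<alpha>) (brdim d (sum_list \<alpha>)) \<theta> \<and>
          \<theta> ` Uang U \<alpha> \<subseteq> brj (sum_list \<alpha>) U \<and>
          (\<forall>f. Ck_enat smul k U f \<longrightarrow>
               (\<forall>x\<in>Uang U \<alpha>. fang smul U \<alpha> f x = dj smul (sum_list \<alpha>) U f (\<theta> x))))"
proof (intro allI impI)
  fix \<alpha> :: "nat list" assume a: "length \<alpha> = d \<and> enat (sum_list \<alpha>) \<le> k"
  have tf: "topological_field TYPE('k)" by (rule assms(1))
  have vs: "vector_space smul" using assms(2) by (simp add: topological_vector_space_def)
  define j where "j = sum_list \<alpha>"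
  obtain \<theta> where th: "affine_lmap (d + j) (brdim d j) \<theta>" "\<forall>x\<in>Uang U \<alpha>. \<theta> x \<in> brj j U"
      "\<forall>f. Ck smul j U f \<longrightarrow> (\<forall>x\<in>Urev U \<alpha>. frev smul \<alpha> f x = dj smul j U f (\<theta> x))"
    using main_ind[OF vs, of d j U] a j_def by blast
  have dense: "\<forall>x\<in>Uang U \<alpha>. \<forall>Ob. lopen Ob \<longrightarrow> x \<in> Ob \<longrightarrow> (\<exists>y\<in>Urev U \<alpha>. y \<in> Ob)"
  proof (intro ballI allI impI)
    fix x Ob assume x: "x \<in> Uang U \<alpha>" and Ob: "lopen Ob" "x \<in> Ob"
    have "\<exists>V. (\<forall>p<length x. open (V p) \<and> (\<forall>B. open B \<longrightarrow> x!p \<in> B \<longrightarrow> B \<inter> V p \<noteq> {})) \<and>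
             (\<forall>y. length y = length x \<longrightarrow> (\<forall>p<length x. y!p \<in> V p) \<longrightarrow> y \<in> Uang U \<alpha>)"
      using assms(5)
    proof
      assume "openin ltop U"
      then have "lopen U" by (simp add: openin_ltop)
      then show ?thesis using dens_open x by blast
    next
      assume "\<exists>Us :: nat \<Rightarrow> 'k set. (\<forall>i<d. Us i \<subseteq> closure (interior (Us i))) \<and>
              U = {x. length x = d \<and> (\<forall>i<d. x!i \<in> Us i)}"
      then obtain Us :: "nat \<Rightarrow> 'k set" where Us: "\<forall>i<length \<alpha>. Us i \<subseteq> closure (interior (Us i))"
        "U = {x. length x = length \<alpha> \<and> (\<forall>i<length \<alpha>. x!i \<in> Us i)}" using a by blast
      show ?thesis by (rule dens_prod[OF Us x])
    qed
    then obtain V where V: "\<forall>p<length x. open (V p) \<and> (\<forall>B. open B \<longrightarrow> x!p \<in> B \<longrightarrow> B \<inter> V p \<noteq> {})"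
             "\<forall>y. length y = length x \<longrightarrow> (\<forall>p<length x. y!p \<in> V p) \<longrightarrow> y \<in> Uang U \<alpha>" by blast
    show "\<exists>y\<in>Urev U \<alpha>. y \<in> Ob" by (rule dens_gen[OF tf x Ob V])
  qed
  show "\<exists>\<theta>. affine_lmap (d + sum_list \<alpha>) (brdim d (sum_list \<alpha>)) \<theta> \<and>
          \<theta> ` Uang U \<alpha> \<subseteq> brj (sum_list \<alpha>) U \<and>
          (\<forall>f. Ck_enat smul k U f \<longrightarrow>
               (\<forall>x\<in>Uang U \<alpha>. fang smul U \<alpha> f x = dj smul (sum_list \<alpha>) U f (\<theta> x)))"
  proof (intro exI[of _ \<theta>] conjI allI impI ballI)
    show "affine_lmap (d + sum_list \<alpha>) (brdim d (sum_list \<alpha>)) \<theta>" using th(1) j_def by simp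
    show "\<theta> ` Uang U \<alpha> \<subseteq> brj (sum_list \<alpha>) U" using th(2) j_def by auto
  next
    fix f x assume f: "Ck_enat smul k U f" and x: "x \<in> Uang U \<alpha>"
    have fj: "Ck smul j U f" using Ck_enat_Ck[OF f] a j_def by simp
    define h0 where "h0 = (\<lambda>y. dj smul j U f (\<theta> y))"
    have UL: "Uang U \<alpha> \<subseteq> {x. length x = d + j}" using a j_def by (auto simp: Uang_def)
    have c\<theta>: "continuous_map (subtopology ltop (Uang U \<alpha>)) ltop \<theta>" by (rule cm_affine[OF tf th(1) UL])
    have c\<theta>': "continuous_map (subtopology ltop (Uang U \<alpha>)) (subtopology ltop (brj j U)) \<theta>"
      unfolding continuous_map_in_subtopology using c\<theta> th(2) by auto
    have cdj: "continuous_map (subtopology ltop (brj j U)) euclidean (dj smul j U f)"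
      using Ck_lcont[OF Ck_shift[of smul j 0 U f]] fj by (simp add: lcont_def)
    have ch0: "continuous_map (subtopology ltop (Uang U \<alpha>)) euclidean h0"
      using continuous_map_compose[OF c\<theta>' cdj] by (simp add: h0_def o_def)
    have rev: "\<forall>y\<in>Urev U \<alpha>. h0 y = frev smul \<alpha> f y" using th(3) fj by (simp add: h0_def)
    have "lcont (Uang U \<alpha>) (fang smul U \<alpha> f) \<and> (\<forall>y\<in>Urev U \<alpha>. fang smul U \<alpha> f y = frev smul \<alpha> f y)"
      unfolding fang_def by (rule someI[of _ h0]) (use ch0 rev in \<open>simp add: lcont_def\<close>)
    then have cf: "continuous_map (subtopology ltop (Uang U \<alpha>)) euclidean (fang smul U \<alpha> f)"
      and ef: "\<forall>y\<in>Urev U \<alpha>. fang smul U \<alpha> f y = frev smul \<alpha> f y" by (simp_all add: lcont_def)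
    have "fang smul U \<alpha> f x = h0 x"
      by (rule ext_unique[OF cf ch0 dense]) (use ef rev x in \<open>auto simp: Urev_def\<close>)
    then show "fang smul U \<alpha> f x = dj smul (sum_list \<alpha>) U f (\<theta> x)" by (simp add: h0_def j_def)
  qed
qed


end
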